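(* Let $P$ be a 6-stack. Then $P$ has a proper retract which (with the induced order) is isomorphic to a tower of sections if and only if $r(P)$ is a multiple of $3$. Consequently, $P$ is minimal automorphic if and only if $r(P)$ is not a multiple of $3$.
   Context: All posets are finite. For a poset $P$ and $p\in P$, the rank $r(p)$ of $p$ is the largest $m$ such that there is a chain $p_0<\dots<p_m=p$ in $P$. $P$ is ranked of rank $r(P)$ if every maximal chain has exactly $r(P)+1$ elements. For $0\le i\le j$, $P(i,j)=\{p\in P:i\le r(p)\le j\}$ (induced order). A subset $Q\subseteq P$ (induced order) is a retract of $P$ if there is an order-preserving $f:P\to Q$ with $f(q)=q$ for all $q\in Q$; it is proper if $Q\neq P$. The 6-crown $C_6$ is the poset on $\{x_0,x_1,x_2,y_0,y_1,y_2\}$ whose only strict comparabilities are $x_0<y_0>x_1<y_1>x_2<y_2>x_0$. A 6-stack is a ranked poset $P$ of rank $n\ge1$ such that $P(i,i+1)\cong C_6$ for each $0\le i<n$. The ordinal sum of posets $P_1,\dots,P_k$ ($k\ge1$) is their disjoint union ordered by the orders of the $P_i$ together with $p<q$ whenever $p\in P_i,q\in P_j,i<j$. A section is either a two-element antichain or a poset on the set $\{[i,k]: 0\le i\le 2,\ 0\le k\le n\}$ (with $3(n+1)$ distinct elements), for some $n\ge 1$, such that: (1) $[i,k]<[i,l]$ whenever $0\le k<l\le n$; (2) for each $k$, $\{[0,k],[1,k],[2,k]\}$ is an antichain; (3) $[i,k]<[j,l]$ implies $[i+1,k]<[j+1,l]$ (first indices mod $3$); (4) for each $0\le k<n$ there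 are $i,j$ with $[i,k]\not<[j,k+1]$. A tower of sections is an ordinal sum of one or more sections. A poset is automorphic if it has an automorphism with no fixed point; it is minimal automorphic if it is automorphic and no proper retract of it is automorphic. *)

theory Defs
  imports Main
begin

definition strict :: "'a rel \<Rightarrow> 'a rel" where
  "strict r = {(x, y). (x, y) \<in> r \<and> x \<noteq> y}"

definition fin_poset :: "'a set \<Rightarrow> 'a rel \<Rightarrow> bool" where
  "fin_poset S r \<longleftrightarrow> finite S \<and> partial_order_on S r"

definition elem_rank :: "'a set \<Rightarrow> 'a rel \<Rightarrow> 'a \<Rightarrow> nat" where
  "elem_rank S r p = (GREATEST m. \<exists>xs. length xs = Suc m \<and> set xs \<subseteq> S
      \<and> sorted_wrt (\<lambda>x y. (x, y) \<in> strict r) xs \<and> last xs = p)"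

definition is_chain :: "'a set \<Rightarrow> 'a rel \<Rightarrow> 'a set \<Rightarrow> bool" where
  "is_chain S r C \<longleftrightarrow> C \<subseteq> S \<and> (\<forall>x\<in>C. \<forall>y\<in>C. (x, y) \<in> r \<or> (y, x) \<in> r)"

definition is_maxchain :: "'a set \<Rightarrow> 'a rel \<Rightarrow> 'a set \<Rightarrow> bool" where
  "is_maxchain S r C \<longleftrightarrow> is_chain S r C \<and> \<not> (\<exists>D. is_chain S r D \<and> C \<subset> D)"

definition ranked :: "'a set \<Rightarrow> 'a rel \<Rightarrow> nat \<Rightarrow> bool" where
  "ranked S r n \<longleftrightarrow> (\<forall>C. is_maxchain S r C \<longrightarrow> card C = Suc n)"

text \<open>P(i,j) as a carrier; the order is the induced one, Restr r.\<close>
definition rank_slice :: "'a set \<Rightarrow> 'a rel \<Rightarrow> nat \<Rightarrow> nat \<Rightarrow> 'a set" where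
  "rank_slice S r i j = {p \<in> S. i \<le> elem_rank S r p \<and> elem_rank S r p \<le> j}"

definition order_iso :: "'a set \<Rightarrow> 'a rel \<Rightarrow> 'b set \<Rightarrow> 'b rel \<Rightarrow> ('a \<Rightarrow> 'b) \<Rightarrow> bool" where
  "order_iso S r T s f \<longleftrightarrow> bij_betw f S T \<and>
     (\<forall>x\<in>S. \<forall>y\<in>S. (x, y) \<in> r \<longleftrightarrow> (f x, f y) \<in> s)"

definition isomorphic :: "'a set \<Rightarrow> 'a rel \<Rightarrow> 'b set \<Rightarrow> 'b rel \<Rightarrow> bool" where
  "isomorphic S r T s \<longleftrightarrow> (\<exists>f. order_iso S r T s f)"

text \<open>The 6-crown: x_i = i, y_i = 3 + i (i = 0,1,2);
  x0 < y0 > x1 < y1 > x2 < y2 > x0.\<close>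
definition crown6_carrier :: "nat set" where
  "crown6_carrier = {0..5}"

definition crown6_rel :: "nat rel" where
  "crown6_rel = Id_on crown6_carrier \<union> {(0,3), (1,3), (1,4), (2,4), (2,5), (0,5)}"

definition six_stack :: "'a set \<Rightarrow> 'a rel \<Rightarrow> nat \<Rightarrow> bool" where
  "six_stack S r n \<longleftrightarrow> fin_poset S r \<and> n \<ge> 1 \<and> ranked S r n \<and>
     (\<forall>i<n. isomorphic (rank_slice S r i (Suc i)) (Restr r (rank_slice S r i (Suc i)))
                        crown6_carrier crown6_rel)"

definition is_retract :: "'a set \<Rightarrow> 'a rel \<Rightarrow> 'a set \<Rightarrow> bool" where
  "is_retract S r Q \<longleftrightarrow> Q \<subseteq> S \<and> (\<exists>f. f ` S \<subseteq> Q \<and>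
     (\<forall>x\<in>S. \<forall>y\<in>S. (x, y) \<in> r \<longrightarrow> (f x, f y) \<in> r) \<and> (\<forall>q\<in>Q. f q = q))"

definition proper_retract :: "'a set \<Rightarrow> 'a rel \<Rightarrow> 'a set \<Rightarrow> bool" where
  "proper_retract S r Q \<longleftrightarrow> is_retract S r Q \<and> Q \<noteq> S"

definition automorphic :: "'a set \<Rightarrow> 'a rel \<Rightarrow> bool" where
  "automorphic S r \<longleftrightarrow> (\<exists>f. order_iso S r S r f \<and> (\<forall>x\<in>S. f x \<noteq> x))"

definition minimal_automorphic :: "'a set \<Rightarrow> 'a rel \<Rightarrow> bool" where
  "minimal_automorphic S r \<longleftrightarrow> automorphic S r \<and>
     \<not> (\<exists>Q. proper_retract S r Q \<and> automorphic Q (Restr r Q))"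

text \<open>Sections, on carriers of type nat \<times> nat; the element [i,k] is (i,k).
  The two-element antichain is represented by a fixed copy (sections matter only up to
  isomorphism, since towers are only used up to isomorphism).\<close>
definition is_section :: "(nat \<times> nat) set \<Rightarrow> (nat \<times> nat) rel \<Rightarrow> bool" where
  "is_section A s \<longleftrightarrow>
     (A = {(0,0), (1,0)} \<and> s = Id_on A) \<or>
     (\<exists>n\<ge>1. A = {0..2} \<times> {0..n} \<and> partial_order_on A s \<and>
        (\<forall>i\<le>2. \<forall>k l. k < l \<and> l \<le> n \<longrightarrow> ((i, k), (i, l)) \<in> strict s) \<and>
        (\<forall>k\<le>n. \<forall>i\<le>2. \<forall>j\<le>2. i \<noteq> j \<longrightarrow> ((i, k), (j, k)) \<notin> s) \<and>
        (\<forall>i k j l. ((i, k), (j, l)) \<in> strict s \<longrightarrow>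
            (((i + 1) mod 3, k), ((j + 1) mod 3, l)) \<in> strict s) \<and>
        (\<forall>k<n. \<exists>i\<le>2. \<exists>j\<le>2. ((i, k), (j, Suc k)) \<notin> strict s))"

definition ord_sum_carrier :: "('b set \<times> 'b rel) list \<Rightarrow> (nat \<times> 'b) set" where
  "ord_sum_carrier ps = {(k, x). k < length ps \<and> x \<in> fst (ps ! k)}"

definition ord_sum_rel :: "('b set \<times> 'b rel) list \<Rightarrow> (nat \<times> 'b) rel" where
  "ord_sum_rel ps = {((k, x), (l, y)). (k, x) \<in> ord_sum_carrier ps \<and> (l, y) \<in> ord_sum_carrier ps \<and>
      ((k = l \<and> (x, y) \<in> snd (ps ! k)) \<or> k < l)}"

definition iso_to_tower :: "'a set \<Rightarrow> 'a rel \<Rightarrow> bool" where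
  "iso_to_tower Q q \<longleftrightarrow> (\<exists>ps. ps \<noteq> [] \<and> (\<forall>p\<in>set ps. is_section (fst p) (snd p)) \<and>
      isomorphic Q q (ord_sum_carrier ps) (ord_sum_rel ps))"

end

theory Submission
  imports Defs
begin
definition sle :: "nat \<times> nat \<Rightarrow> nat \<times> nat \<Rightarrow> bool" where
  "sle x y \<longleftrightarrow> x = y \<or> snd x + 2 \<le> snd y \<or> (snd y = Suc (snd x) \<and> fst y \<noteq> (fst x + 1) mod 3)"

definition Mc :: "nat \<Rightarrow> (nat \<times> nat) set" where
  "Mc n = {x. fst x < 3 \<and> snd x \<le> n}"

lemma sle_strict: "sle x y \<Longrightarrow> x \<noteq> y \<Longrightarrow> snd x < snd y"
  by (auto simp: sle_def)

lemma F1p: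
  assumes "a < 3"
   "u = ((a + 1) mod 3, k) \<or> u = ((a + 2) mod 3, k) \<or> u = ((a + 1) mod 3, Suc k) \<or> (k \<ge> 1 \<and> u = ((a + 2) mod 3, k - 1))"
   "v = ((a + 1) mod 3, Suc k) \<or> v = ((a + 2) mod 3, Suc k) \<or> v = ((a + 1) mod 3, Suc (Suc k)) \<or> v = ((a + 2) mod 3, k)"
   "sle u v" "fst v = (a + 2) mod 3"
  shows "fst u = (a + 2) mod 3"
proof -
  have "a = 0 \<or> a = 1 \<or> a = 2" using assms by auto
  then show ?thesis using assms(2-5) unfolding sle_def by (elim disjE) auto
qed
lemma F2p:
  assumes "a < 3"
   "u = ((a + 1) mod 3, k) \<or> u = ((a + 2) mod 3, k) \<or> u = ((a + 1) mod 3, Suc k) \<or> (k \<ge> 1 \<and> u = ((a + 2) mod 3, k - 1))"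
   "v = (((a + 2) mod 3 + 1) mod 3, Suc k) \<or> v = (((a + 2) mod 3 + 2) mod 3, Suc k) \<or> v = (((a + 2) mod 3 + 1) mod 3, Suc (Suc k)) \<or> v = (((a + 2) mod 3 + 2) mod 3, k)"
   "sle u v" "v = (((a + 2) mod 3 + 1) mod 3, Suc k) \<or> snd v + 1 = Suc k"
  shows "u = ((a + 1) mod 3, k) \<or> snd u + 1 = k"
proof -
  have "a = 0 \<or> a = 1 \<or> a = 2" using assms by auto
  then show ?thesis using assms(2-5) unfolding sle_def by (elim disjE) auto
qed
lemma cls0:
  assumes "a < 3" "b < 3" "\<not> sle (a, k) (b, l)" "\<not> sle (b, l) (a, k)" "(b, l) \<noteq> (a, k)"
  shows "(b, l) = ((a + 1) mod 3, k) \<or> (b, l) = ((a + 2) mod 3, k) \<or>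
         (b, l) = ((a + 1) mod 3, Suc k) \<or> (k \<ge> 1 \<and> (b, l) = ((a + 2) mod 3, k - 1))"
proof -
  have "l = k \<or> l = Suc k \<or> k = Suc l" using assms(3,4) by (auto simp: sle_def)
  moreover have "a = 0 \<or> a = 1 \<or> a = 2" "b = 0 \<or> b = 1 \<or> b = 2" using assms by auto
  ultimately show ?thesis using assms(3-5) unfolding sle_def by (elim disjE) auto
qed

lemma typ_m:
  assumes "(c::nat) < 3"
   "u = ((c + 1) mod 3, k) \<or> u = ((c + 2) mod 3, k) \<or> u = ((c + 1) mod 3, Suc k) \<or> (k \<ge> 1 \<and> u = ((c + 2) mod 3, k - 1))"
   "fst u = (c + 2) mod 3" "\<not> (u = ((c + 1) mod 3, k) \<or> snd u + 1 = k)"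
  shows "u = ((c + 2) mod 3, k)"
proof -
  have "c = 0 \<or> c = 1 \<or> c = 2" using assms by auto
  then show ?thesis using assms(2-4) by (elim disjE) auto
qed
lemma typ_p:
  assumes "(c::nat) < 3"
   "u = ((c + 1) mod 3, k) \<or> u = ((c + 2) mod 3, k) \<or> u = ((c + 1) mod 3, Suc k) \<or> (k \<ge> 1 \<and> u = ((c + 2) mod 3, k - 1))"
   "fst u \<noteq> (c + 2) mod 3" "u = ((c + 1) mod 3, k) \<or> snd u + 1 = k"
  shows "u = ((c + 1) mod 3, k)"
proof -
  have "c = 0 \<or> c = 1 \<or> c = 2" using assms by auto
  then show ?thesis using assms(2-4) by (elim disjE) auto
qed
lemma mod3_aux: "((c + 2 * d) mod 3 + d) mod 3 = (c::nat) mod 3"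
proof -
  have "((c + 2 * d) mod 3 + d) mod 3 = (c + 2 * d + d) mod 3" by (simp add: mod_add_left_eq)
  also have "c + 2 * d + d = c + 3 * d" by simp
  finally show ?thesis by simp
qed
lemma inj1: "a < 3 \<Longrightarrow> b < 3 \<Longrightarrow> (a + 1) mod 3 = (b + 1) mod 3 \<Longrightarrow> a = (b::nat)"
proof -
  assume "a < 3" "b < 3" "(a + 1) mod 3 = (b + 1) mod 3"
  moreover have "a = 0 \<or> a = 1 \<or> a = 2" "b = 0 \<or> b = 1 \<or> b = 2" using calculation by auto
  ultimately show ?thesis by (elim disjE) auto
qed
lemma inj2: "a < 3 \<Longrightarrow> b < 3 \<Longrightarrow> (a + 2) mod 3 = (b + 2) mod 3 \<Longrightarrow> a = (b::nat)"
proof -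
  assume "a < 3" "b < 3" "(a + 2) mod 3 = (b + 2) mod 3"
  moreover have "a = 0 \<or> a = 1 \<or> a = 2" "b = 0 \<or> b = 1 \<or> b = 2" using calculation by auto
  ultimately show ?thesis by (elim disjE) auto
qed

context
  fixes h :: "nat \<times> nat \<Rightarrow> nat \<times> nat" and n :: nat
  assumes hM: "\<forall>x\<in>Mc n. h x \<in> Mc n"
    and mono: "\<forall>x\<in>Mc n. \<forall>y\<in>Mc n. sle x y \<longrightarrow> sle (h x) (h y)"
    and fpf: "\<forall>x\<in>Mc n. h x \<noteq> x"
begin

lemma iter_up:
  assumes x: "x \<in> Mc n" and s: "sle x (h x)"
  shows "(h ^^ j) x \<in> Mc n \<and> sle ((h ^^ j) x) ((h ^^ Suc j) x) \<and> snd x + j \<le> snd ((h ^^ j) x)"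
proof (induction j)
  case 0 then show ?case using x s by simp
next
  case (Suc j)
  let ?y = "(h ^^ j) x"
  have y: "?y \<in> Mc n" and sy: "sle ?y (h ?y)" and ly: "snd x + j \<le> snd ?y" using Suc by auto
  have hy: "h ?y \<in> Mc n" using hM y by blast
  have "h ?y \<noteq> ?y" using fpf y by blast
  then have "snd ?y < snd (h ?y)" using sle_strict sy by metis
  moreover have "sle (h ?y) (h (h ?y))" using mono y hy sy by blast
  ultimately show ?case using hy ly by simp
qed

lemma iter_down:
  assumes x: "x \<in> Mc n" and s: "sle (h x) x"
  shows "(h ^^ j) x \<in> Mc n \<and> sle ((h ^^ Suc j) x) ((h ^^ j) x) \<and> snd ((h ^^ j) x) + j \<le> snd x"
proof (induction j)
  case 0 then show ?case using x s by simp
next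
  case (Suc j)
  let ?y = "(h ^^ j) x"
  have y: "?y \<in> Mc n" and sy: "sle (h ?y) ?y" and ly: "snd ?y + j \<le> snd x" using Suc by auto
  have hy: "h ?y \<in> Mc n" using hM y by blast
  have "h ?y \<noteq> ?y" using fpf y by blast
  then have "snd (h ?y) < snd ?y" using sle_strict sy by metis
  moreover have "sle (h (h ?y)) (h ?y)" using mono y hy sy by blast
  ultimately show ?case using hy ly by simp
qed

lemma incomp:
  assumes x: "x \<in> Mc n"
  shows "\<not> sle x (h x) \<and> \<not> sle (h x) x"
proof
  show "\<not> sle x (h x)"
  proof
    assume "sle x (h x)"
    from iter_up[OF x this, of "Suc n"] x show False by (auto simp: Mc_def)
  qed
  show "\<not> sle (h x) x"
  proof
    assume "sle (h x) x"
    from iter_down[OF x this, of "Suc n"] x show False by (auto simp: Mc_def)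
  qed
qed

lemma cls:
  assumes "a < 3" "k \<le> n"
  shows "h (a, k) = ((a + 1) mod 3, k) \<or> h (a, k) = ((a + 2) mod 3, k) \<or>
         h (a, k) = ((a + 1) mod 3, Suc k) \<or> (k \<ge> 1 \<and> h (a, k) = ((a + 2) mod 3, k - 1))"
proof -
  have x: "(a, k) \<in> Mc n" using assms by (simp add: Mc_def)
  obtain b l where hb: "h (a, k) = (b, l)" by fastforce
  have "h (a, k) \<in> Mc n" using hM x by blast
  then have bl: "b < 3" "l \<le> n" using hb by (auto simp: Mc_def)
  have ne: "(b, l) \<noteq> (a, k)" using fpf x hb by auto
  have i1: "\<not> sle (a, k) (b, l)" and i2: "\<not> sle (b, l) (a, k)" using incomp[OF x] hb by auto
  show ?thesis using cls0[OF assms(1) bl(1) i1 i2 ne] hb by simp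
qed

definition Sb where "Sb x \<longleftrightarrow> fst (h x) = (fst x + 2) mod 3"
definition Bt where "Bt x \<longleftrightarrow> h x = ((fst x + 1) mod 3, snd x) \<or> snd (h x) + 1 = snd x"

lemma F1:
  assumes "a < 3" "Suc k \<le> n" "Sb (a, Suc k)"
  shows "Sb (a, k)"
proof -
  have x: "(a, k) \<in> Mc n" and y: "(a, Suc k) \<in> Mc n" using assms by (auto simp: Mc_def)
  have "sle (a, k) (a, Suc k)" using assms(1) unfolding sle_def by (simp; presburger)
  then have s: "sle (h (a, k)) (h (a, Suc k))" using mono x y by blast
  have c1: "h (a, k) = ((a + 1) mod 3, k) \<or> h (a, k) = ((a + 2) mod 3, k) \<or>
         h (a, k) = ((a + 1) mod 3, Suc k) \<or> (k \<ge> 1 \<and> h (a, k) = ((a + 2) mod 3, k - 1))"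
    using cls assms by simp
  have c2: "h (a, Suc k) = ((a + 1) mod 3, Suc k) \<or> h (a, Suc k) = ((a + 2) mod 3, Suc k) \<or>
         h (a, Suc k) = ((a + 1) mod 3, Suc (Suc k)) \<or> h (a, Suc k) = ((a + 2) mod 3, k)"
    using cls[of a "Suc k"] assms by simp
  show ?thesis using F1p[OF assms(1) c1 c2 s] assms(3) unfolding Sb_def by simp
qed

lemma F2:
  assumes "a < 3" "Suc k \<le> n" "Bt ((a + 2) mod 3, Suc k)"
  shows "Bt (a, k)"
proof -
  have x: "(a, k) \<in> Mc n" and y: "((a + 2) mod 3, Suc k) \<in> Mc n" using assms by (auto simp: Mc_def)
  have "sle (a, k) ((a + 2) mod 3, Suc k)" using assms(1) unfolding sle_def by (simp; presburger)
  then have s: "sle (h (a, k)) (h ((a + 2) mod 3, Suc k))" using mono x y by blast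
  have c1: "h (a, k) = ((a + 1) mod 3, k) \<or> h (a, k) = ((a + 2) mod 3, k) \<or>
         h (a, k) = ((a + 1) mod 3, Suc k) \<or> (k \<ge> 1 \<and> h (a, k) = ((a + 2) mod 3, k - 1))"
    using cls assms by simp
  have c2: "h ((a + 2) mod 3, Suc k) = (((a + 2) mod 3 + 1) mod 3, Suc k) \<or> h ((a + 2) mod 3, Suc k) = (((a + 2) mod 3 + 2) mod 3, Suc k) \<or>
         h ((a + 2) mod 3, Suc k) = (((a + 2) mod 3 + 1) mod 3, Suc (Suc k)) \<or> h ((a + 2) mod 3, Suc k) = (((a + 2) mod 3 + 2) mod 3, k)"
    using cls[of "(a + 2) mod 3" "Suc k"] assms by simp
  show ?thesis using F2p[OF assms(1) c1 c2 s] assms(3) unfolding Bt_def by simp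
qed

lemma bot0: "a < 3 \<Longrightarrow> \<not> (Sb (a, 0) \<and> Bt (a, 0))"
  using cls[of a 0] unfolding Sb_def Bt_def by (auto simp: mod_Suc)

lemma topn: "a < 3 \<Longrightarrow> Sb (a, n) \<or> Bt (a, n)"
proof -
  assume a: "a < 3"
  have "(a, n) \<in> Mc n" using a by (simp add: Mc_def)
  then have "h (a, n) \<in> Mc n" using hM by blast
  then have "snd (h (a, n)) \<le> n" by (simp add: Mc_def)
  then show ?thesis using cls[of a n] a unfolding Sb_def Bt_def by auto
qed

lemma SbDown: "a < 3 \<Longrightarrow> k + d \<le> n \<Longrightarrow> Sb (a, k + d) \<Longrightarrow> Sb (a, k)"
proof (induction d)
  case 0 then show ?case by simp
next
  case (Suc d)
  then have "Sb (a, k + d)" using F1[of a "k + d"] by simp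
  then show ?case using Suc by simp
qed

lemma BtDown: "b < 3 \<Longrightarrow> k + d \<le> n \<Longrightarrow> Bt (b, k + d) \<Longrightarrow> Bt ((b + d) mod 3, k)"
proof (induction d arbitrary: b)
  case 0 then show ?case by simp
next
  case (Suc d)
  have e: "(((b + 1) mod 3) + 2) mod 3 = b" using Suc.prems(1) by presburger
  have "Bt ((b + 1) mod 3, k + d)"
    using F2[of "(b + 1) mod 3" "k + d"] Suc.prems e by simp
  then have "Bt (((b + 1) mod 3 + d) mod 3, k)" using Suc.IH[of "(b + 1) mod 3"] Suc.prems by simp
  moreover have "((b + 1) mod 3 + d) mod 3 = (b + Suc d) mod 3" by (simp add: mod_add_left_eq)
  ultimately show ?case by simp
qed

lemma allp_or_allm:
  assumes nd: "\<not> 3 dvd n"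
  shows "(\<forall>x\<in>Mc n. h x = ((fst x + 1) mod 3, snd x)) \<or> (\<forall>x\<in>Mc n. h x = ((fst x + 2) mod 3, snd x))"
proof -
  have imp: "Sb ((b + n) mod 3, 0) \<Longrightarrow> Sb (b, 0)" if b: "b < 3" for b
  proof -
    assume H: "Sb ((b + n) mod 3, 0)"
    from topn[OF b] show "Sb (b, 0)"
    proof
      assume "Sb (b, n)" then show ?thesis using SbDown[of b 0 n] b by simp
    next
      assume "Bt (b, n)" then have "Bt ((b + n) mod 3, 0)" using BtDown[of b 0 n] b by simp
      then show ?thesis using bot0[of "(b + n) mod 3"] H by simp
    qed
  qed
  have nm: "n mod 3 = 1 \<or> n mod 3 = 2" using nd by presburger
  have eq: "(Sb (0, 0) = Sb (1, 0)) \<and> (Sb (1, 0) = Sb (2, 0))"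
  proof (cases "n mod 3 = 1")
    case True
    have "(0 + n) mod 3 = 1" "(1 + n) mod 3 = 2" "(2 + n) mod 3 = 0" using True by presburger+
    then show ?thesis using imp[of 0] imp[of 1] imp[of 2] by auto
  next
    case False
    then have "n mod 3 = 2" using nm by simp
    then have "(0 + n) mod 3 = 2" "(1 + n) mod 3 = 0" "(2 + n) mod 3 = 1" by presburger+
    then show ?thesis using imp[of 0] imp[of 1] imp[of 2] by auto
  qed
  have a3: "\<And>a::nat. a < 3 \<Longrightarrow> a = 0 \<or> a = 1 \<or> a = 2" by auto
  show ?thesis
  proof (cases "Sb (0, 0)")
    case True
    then have s0: "\<forall>a<3. Sb (a, 0)" using eq a3 by metis
    then have b0: "\<forall>a<3. \<not> Bt (a, 0)" using bot0 by blast
    have nb: "\<not> Bt (c, k)" if "c < 3" "k \<le> n" for c k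
    proof
      assume "Bt (c, k)"
      then have "Bt ((c + k) mod 3, 0)" using BtDown[of c 0 k] that by simp
      then show False using b0 by simp
    qed
    have sn: "Sb (b, n)" if "b < 3" for b using topn[OF that] nb[OF that] by simp
    have sa: "Sb (c, k)" if "c < 3" "k \<le> n" for c k
      using SbDown[of c k "n - k"] sn[of c] that by simp
    have "h x = ((fst x + 2) mod 3, snd x)" if xM: "x \<in> Mc n" for x
    proof -
      obtain c k where x: "x = (c, k)" "c < 3" "k \<le> n" using xM by (cases x) (auto simp: Mc_def)
      show ?thesis using typ_m[OF x(2) cls[OF x(2,3)]] sa[OF x(2,3)] nb[OF x(2,3)] x unfolding Sb_def Bt_def by simp
    qed
    then show ?thesis by blast
  next
    case False
    then have s0: "\<forall>a<3. \<not> Sb (a, 0)" using eq a3 by metis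
    have ns: "\<not> Sb (c, k)" if "c < 3" "k \<le> n" for c k
      using SbDown[of c 0 k] s0 that by auto
    have bn: "Bt (b, n)" if "b < 3" for b using topn[OF that] ns[OF that] by simp
    have ba: "Bt (c, k)" if "c < 3" "k \<le> n" for c k
    proof -
      let ?b = "(c + 2 * (n - k)) mod 3"
      have "Bt ((?b + (n - k)) mod 3, k)" using BtDown[of ?b k "n - k"] bn[of ?b] that by simp
      moreover have "(?b + (n - k)) mod 3 = c" using that(1) mod3_aux[of c "n - k"] by simp
      ultimately show ?thesis by simp
    qed
    have "h x = ((fst x + 1) mod 3, snd x)" if xM: "x \<in> Mc n" for x
    proof -
      obtain c k where x: "x = (c, k)" "c < 3" "k \<le> n" using xM by (cases x) (auto simp: Mc_def)
      show ?thesis using typ_p[OF x(2) cls[OF x(2,3)]] ns[OF x(2,3)] ba[OF x(2,3)] x unfolding Sb_def Bt_def by simp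
    qed
    then show ?thesis by blast
  qed
qed

lemma inj_core:
  assumes nd: "\<not> 3 dvd n"
  shows "inj_on h (Mc n)"
  using allp_or_allm[OF nd]
proof
  assume H: "\<forall>x\<in>Mc n. h x = ((fst x + 1) mod 3, snd x)"
  show ?thesis
  proof (rule inj_onI)
    fix x y assume "x \<in> Mc n" "y \<in> Mc n" "h x = h y"
    then show "x = y" using H inj1[of "fst x" "fst y"] by (auto simp: Mc_def prod_eq_iff)
  qed
next
  assume H: "\<forall>x\<in>Mc n. h x = ((fst x + 2) mod 3, snd x)"
  show ?thesis
  proof (rule inj_onI)
    fix x y assume "x \<in> Mc n" "y \<in> Mc n" "h x = h y"
    then show "x = y" using H inj2[of "fst x" "fst y"] by (auto simp: Mc_def prod_eq_iff)
  qed
qed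

end

lemma c6carrier: "crown6_carrier = {0..5}" by (simp add: crown6_carrier_def)

lemma c6a: "w < 3 \<Longrightarrow> (u, w) \<in> crown6_rel \<Longrightarrow> u = w"
  by (auto simp: crown6_rel_def crown6_carrier_def Id_on_def)

lemma c6b: "3 \<le> w \<Longrightarrow> w \<le> 5 \<Longrightarrow> \<exists>u<3. (u, w) \<in> crown6_rel"
proof -
  assume "3 \<le> w" "w \<le> 5"
  then have "w = 3 \<or> w = 4 \<or> w = 5" by auto
  moreover have "(0, 3) \<in> crown6_rel" "(1, 4) \<in> crown6_rel" "(0, 5) \<in> crown6_rel"
    by (auto simp: crown6_rel_def)
  ultimately show ?thesis by (metis less_numeral_extra(3) zero_less_numeral one_less_numeral_iff semiring_norm(77))
qed

lemma c6c: "u < 3 \<Longrightarrow> 3 \<le> w \<Longrightarrow> w \<le> 5 \<Longrightarrow> ((u, w) \<in> crown6_rel \<longleftrightarrow> u \<noteq> (w + 2) mod 3)"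
proof -
  assume "u < 3" "3 \<le> w" "w \<le> 5"
  then have "u = 0 \<or> u = 1 \<or> u = 2" "w = 3 \<or> w = 4 \<or> w = 5" by auto
  then show ?thesis by (elim disjE) (auto simp: crown6_rel_def Id_on_def)
qed

lemma sw_last: "sorted_wrt R xs \<Longrightarrow> xs \<noteq> [] \<Longrightarrow> z \<in> set xs \<Longrightarrow> z = last xs \<or> R z (last xs)"
  by (induction xs) auto

lemma sw_distinct: "sorted_wrt (\<lambda>x y. (x, y) \<in> strict r) xs \<Longrightarrow> distinct xs"
  by (induction xs) (auto simp: strict_def)

locale stk =
  fixes S :: "'a set" and r :: "'a rel" and n :: nat
  assumes st: "six_stack S r n"
begin

lemma fin: "finite S" and po: "partial_order_on S r" and n1: "1 \<le> n" and rkd: "ranked S r n"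
  and sl: "\<forall>i<n. isomorphic (rank_slice S r i (Suc i)) (Restr r (rank_slice S r i (Suc i))) crown6_carrier crown6_rel"
  using st unfolding six_stack_def fin_poset_def by auto

lemma rsub: "r \<subseteq> S \<times> S" and rrefl: "x \<in> S \<Longrightarrow> (x, x) \<in> r"
  and rtrans: "(x, y) \<in> r \<Longrightarrow> (y, z) \<in> r \<Longrightarrow> (x, z) \<in> r"
  and rantisym: "(x, y) \<in> r \<Longrightarrow> (y, x) \<in> r \<Longrightarrow> x = y"
  using po unfolding partial_order_on_def preorder_on_def refl_on_def trans_def antisym_def by blast+

definition lt where "lt x y \<longleftrightarrow> (x, y) \<in> strict r"

lemma lt_iff: "lt x y \<longleftrightarrow> (x, y) \<in> r \<and> x \<noteq> y" by (simp add: lt_def strict_def)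

lemma lt_trans: "lt x y \<Longrightarrow> lt y z \<Longrightarrow> lt x z"
  unfolding lt_iff using rtrans rantisym by blast

definition cw :: "'a \<Rightarrow> nat \<Rightarrow> bool" where
  "cw p m \<longleftrightarrow> (\<exists>xs. length xs = Suc m \<and> set xs \<subseteq> S \<and> sorted_wrt (\<lambda>x y. (x, y) \<in> strict r) xs \<and> last xs = p)"

abbreviation rk where "rk \<equiv> elem_rank S r"

lemma rk_eq: "rk p = (GREATEST m. cw p m)" by (simp add: elem_rank_def cw_def)

lemma cw_bound: "cw p m \<Longrightarrow> m \<le> card S"
proof -
  assume "cw p m"
  then obtain xs where xs: "length xs = Suc m" "set xs \<subseteq> S" "sorted_wrt (\<lambda>x y. (x, y) \<in> strict r) xs"
    unfolding cw_def by blast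
  have "distinct xs" using sw_distinct xs(3) by blast
  then have "card (set xs) = Suc m" using xs(1) distinct_card by fastforce
  moreover have "card (set xs) \<le> card S" using xs(2) fin card_mono by blast
  ultimately show ?thesis by simp
qed

lemma cw0: "p \<in> S \<Longrightarrow> cw p 0"
  unfolding cw_def by (rule exI[of _ "[p]"]) simp

lemma rk_wit: "p \<in> S \<Longrightarrow> cw p (rk p)"
  unfolding rk_eq using GreatestI_nat[of "cw p" 0 "card S"] cw0 cw_bound by blast

lemma rk_ge: "cw p m \<Longrightarrow> m \<le> rk p"
  unfolding rk_eq using Greatest_le_nat[of "cw p" m "card S"] cw_bound by blast

lemma rk_lt: assumes "y \<in> S" "lt x y" shows "rk x < rk y"
proof -
  have xS: "x \<in> S" using assms rsub unfolding lt_iff by blast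
  obtain xs where xs: "length xs = Suc (rk x)" "set xs \<subseteq> S" "sorted_wrt (\<lambda>x y. (x, y) \<in> strict r) xs" "last xs = x"
    using rk_wit[OF xS] unfolding cw_def by blast
  have ne: "xs \<noteq> []" using xs(1) by auto
  have "\<forall>z\<in>set xs. (z, y) \<in> strict r"
  proof
    fix z assume "z \<in> set xs"
    then have "z = x \<or> lt z x" using sw_last[OF xs(3) ne] xs(4) unfolding lt_def by blast
    then show "(z, y) \<in> strict r" using assms(2) lt_trans unfolding lt_def by blast
  qed
  then have "sorted_wrt (\<lambda>x y. (x, y) \<in> strict r) (xs @ [y])" using xs(3) by (simp add: sorted_wrt_append)
  then have "cw y (Suc (rk x))" unfolding cw_def using xs assms(1)
    by (intro exI[of _ "xs @ [y]"]) auto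
  then show ?thesis using rk_ge by fastforce
qed

lemma rk_pred: assumes "p \<in> S" "rk p = Suc m" shows "\<exists>q\<in>S. lt q p \<and> rk q = m"
proof -
  obtain xs where xs: "length xs = Suc (Suc m)" "set xs \<subseteq> S" "sorted_wrt (\<lambda>x y. (x, y) \<in> strict r) xs" "last xs = p"
    using rk_wit[OF assms(1)] assms(2) unfolding cw_def by auto
  have ne: "xs \<noteq> []" using xs(1) by auto
  obtain ys where dec: "xs = ys @ [p]" using ne xs(4) by (metis append_butlast_last_id)
  have ly: "length ys = Suc m" using xs(1) dec by simp
  then have yne: "ys \<noteq> []" by auto
  let ?ys = ys
  let ?q = "last ?ys"
  have sw2: "sorted_wrt (\<lambda>x y. (x, y) \<in> strict r) (ys @ [p])" using xs(3) dec by simp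
  have sy: "sorted_wrt (\<lambda>x y. (x, y) \<in> strict r) ?ys" and all: "\<forall>z\<in>set ?ys. (z, p) \<in> strict r"
    using sw2 unfolding sorted_wrt_append by auto
  have ysS: "set ys \<subseteq> S" using xs(2) dec by simp
  have qin: "?q \<in> set ?ys" using yne by simp
  have qS: "?q \<in> S" using qin ysS by blast
  have ltq: "lt ?q p" using all qin unfolding lt_def by blast
  have "cw ?q m" unfolding cw_def using ly sy ysS
    by (intro exI[of _ ?ys]) auto
  then have "m \<le> rk ?q" by (rule rk_ge)
  moreover have "rk ?q < rk p" using rk_lt[OF assms(1) ltq] .
  ultimately show ?thesis using qS ltq assms(2) by (intro bexI[of _ ?q]) auto
qed

lemma rk_le_n: assumes "p \<in> S" shows "rk p \<le> n"
proof -
  obtain xs where xs: "length xs = Suc (rk p)" "set xs \<subseteq> S" "sorted_wrt (\<lambda>x y. (x, y) \<in> strict r) xs"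
    using rk_wit[OF assms] unfolding cw_def by blast
  let ?C = "set xs"
  have dxs: "distinct xs" using sw_distinct xs(3) by blast
  have cC: "card ?C = Suc (rk p)" using dxs xs(1) distinct_card by fastforce
  have chC: "is_chain S r ?C"
    unfolding is_chain_def
  proof (intro conjI ballI)
    show "?C \<subseteq> S" by (rule xs(2))
    fix x y assume x: "x \<in> ?C" and y: "y \<in> ?C"
    obtain i where i: "i < length xs" "xs ! i = x" using x by (metis in_set_conv_nth)
    obtain j where j: "j < length xs" "xs ! j = y" using y by (metis in_set_conv_nth)
    show "(x, y) \<in> r \<or> (y, x) \<in> r"
    proof (cases "i < j")
      case True then show ?thesis using sorted_wrt_nth_less[OF xs(3) True j(1)] i j by (auto simp: strict_def)
    next
      case False
      show ?thesis
      proof (cases "i = j")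
        case True then show ?thesis using i j x xs(2) rrefl by auto
      next
        case False
        then have "j < i" using \<open>\<not> i < j\<close> by simp
        then show ?thesis using sorted_wrt_nth_less[OF xs(3) \<open>j < i\<close> i(1)] i j by (auto simp: strict_def)
      qed
    qed
  qed
  let ?P = "\<lambda>D. is_chain S r D \<and> ?C \<subseteq> D"
  have "\<forall>D. ?P D \<longrightarrow> card D < Suc (card S)"
    using fin by (auto simp: is_chain_def intro: card_mono le_imp_less_Suc)
  then obtain D where D: "?P D" and Dmax: "\<forall>D'. ?P D' \<longrightarrow> card D' \<le> card D"
    using ex_has_greatest_nat[of ?P ?C card "Suc (card S)"] chC by blast
  have "is_maxchain S r D"
    unfolding is_maxchain_def
  proof (intro conjI notI)
    show "is_chain S r D" using D by blast
    assume "\<exists>D'. is_chain S r D' \<and> D \<subset> D'"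
    then obtain D' where D': "is_chain S r D'" "D \<subset> D'" by blast
    have "finite D'" using D'(1) fin by (auto simp: is_chain_def intro: finite_subset)
    then have "card D < card D'" using D'(2) psubset_card_mono by blast
    moreover have "?P D'" using D D' by auto
    ultimately show False using Dmax by fastforce
  qed
  then have "card D = Suc n" using rkd unfolding ranked_def by blast
  moreover have "card ?C \<le> card D"
    using D fin by (auto simp: is_chain_def intro: card_mono finite_subset)
  ultimately show ?thesis using cC by simp
qed

definition Lv where "Lv k = {p \<in> S. rk p = k}"

lemma slice_eq: "rank_slice S r k (Suc k) = Lv k \<union> Lv (Suc k)"
  unfolding rank_slice_def Lv_def by auto

lemma crown_k:
  assumes k: "k < n"
  shows "\<exists>\<psi>::'a \<Rightarrow> nat. inj_on \<psi> (Lv k \<union> Lv (Suc k)) \<and> \<psi> ` Lv k = {0, 1, 2} \<and> \<psi> ` Lv (Suc k) = {3, 4, 5} \<and>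
     (\<forall>x\<in>Lv k. \<forall>y\<in>Lv (Suc k). lt x y \<longleftrightarrow> \<psi> x \<noteq> (\<psi> y + 2) mod 3)"
proof -
  let ?A = "Lv k \<union> Lv (Suc k)"
  obtain \<psi> where iso: "order_iso ?A (Restr r ?A) crown6_carrier crown6_rel \<psi>"
  proof -
    have "isomorphic (rank_slice S r k (Suc k)) (Restr r (rank_slice S r k (Suc k))) crown6_carrier crown6_rel"
      using sl k by blast
    then show ?thesis using that unfolding isomorphic_def slice_eq by blast
  qed
  have bij0: "bij_betw \<psi> ?A crown6_carrier"
    and ord0: "\<forall>x\<in>?A. \<forall>y\<in>?A. (x, y) \<in> Restr r ?A \<longleftrightarrow> (\<psi> x, \<psi> y) \<in> crown6_rel"
    using iso unfolding order_iso_def by blast+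
  have bij: "bij_betw \<psi> ?A {0..5}" using bij0 unfolding c6carrier .
  have ord: "\<forall>x\<in>?A. \<forall>y\<in>?A. (x, y) \<in> r \<longleftrightarrow> (\<psi> x, \<psi> y) \<in> crown6_rel"
  proof (intro ballI)
    fix x y assume "x \<in> ?A" "y \<in> ?A"
    then have "(x, y) \<in> Restr r ?A \<longleftrightarrow> (x, y) \<in> r" by blast
    then show "(x, y) \<in> r \<longleftrightarrow> (\<psi> x, \<psi> y) \<in> crown6_rel" using ord0 \<open>x \<in> ?A\<close> \<open>y \<in> ?A\<close> by blast
  qed
  have inj: "inj_on \<psi> ?A" using bij unfolding bij_betw_def by blast
  have img: "\<psi> ` ?A = {0..5}" using bij unfolding bij_betw_def by blast
  have lo: "\<psi> x < 3" if x: "x \<in> Lv k" for x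
  proof (rule ccontr)
    assume "\<not> \<psi> x < 3"
    moreover have "\<psi> x \<le> 5" using img x by auto
    ultimately obtain u where u: "u < 3" "(u, \<psi> x) \<in> crown6_rel" using c6b[of "\<psi> x"] by auto
    have "u \<in> \<psi> ` ?A" using img u by auto
    then obtain v where v: "v \<in> ?A" "\<psi> v = u" by blast
    have "(v, x) \<in> r" using ord v x u by auto
    moreover have "v \<noteq> x" using v u \<open>\<not> \<psi> x < 3\<close> by auto
    ultimately have "lt v x" by (simp add: lt_iff)
    then have "rk v < rk x" using rk_lt x unfolding Lv_def by blast
    then show False using v x unfolding Lv_def by auto
  qed
  have hi: "3 \<le> \<psi> y" if y: "y \<in> Lv (Suc k)" for y
  proof (rule ccontr)
    assume H: "\<not> 3 \<le> \<psi> y"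
    obtain q where q: "q \<in> S" "lt q y" "rk q = k" using rk_pred y unfolding Lv_def by blast
    have qA: "q \<in> ?A" using q unfolding Lv_def by auto
    have "(\<psi> q, \<psi> y) \<in> crown6_rel" using ord qA y q(2) unfolding lt_iff by auto
    then have "\<psi> q = \<psi> y" using c6a H by auto
    then have "q = y" using inj qA y by (auto dest: inj_onD)
    then show False using q(2) unfolding lt_iff by simp
  qed
  have i1: "\<psi> ` Lv k \<subseteq> {0, 1, 2}" using lo by force
  have i2: "\<psi> ` Lv (Suc k) \<subseteq> {3, 4, 5}"
  proof
    fix w assume "w \<in> \<psi> ` Lv (Suc k)"
    then obtain y where y: "y \<in> Lv (Suc k)" "w = \<psi> y" by blast
    have "w \<le> 5" using img y by auto
    moreover have "3 \<le> w" using hi y by simp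
    ultimately show "w \<in> {3, 4, 5}" by auto
  qed
  have un: "\<psi> ` Lv k \<union> \<psi> ` Lv (Suc k) = {0..5}" using img by auto
  have e1: "\<psi> ` Lv k = {0, 1, 2}"
  proof
    show "\<psi> ` Lv k \<subseteq> {0, 1, 2}" by (rule i1)
    show "{0, 1, 2} \<subseteq> \<psi> ` Lv k"
    proof
      fix w :: nat assume w: "w \<in> {0, 1, 2}"
      then have "w \<in> {0..5}" by auto
      then have "w \<in> \<psi> ` Lv k \<union> \<psi> ` Lv (Suc k)" using un by simp
      moreover have "w \<notin> {3, 4, 5}" using w by auto
      ultimately show "w \<in> \<psi> ` Lv k" using i2 by blast
    qed
  qed
  have e2: "\<psi> ` Lv (Suc k) = {3, 4, 5}"
  proof
    show "\<psi> ` Lv (Suc k) \<subseteq> {3, 4, 5}" by (rule i2)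
    show "{3, 4, 5} \<subseteq> \<psi> ` Lv (Suc k)"
    proof
      fix w :: nat assume w: "w \<in> {3, 4, 5}"
      then have "w \<in> {0..5}" by auto
      then have "w \<in> \<psi> ` Lv k \<union> \<psi> ` Lv (Suc k)" using un by simp
      moreover have "w \<notin> {0, 1, 2}" using w by auto
      ultimately show "w \<in> \<psi> ` Lv (Suc k)" using i1 by blast
    qed
  qed
  have rel: "lt x y \<longleftrightarrow> \<psi> x \<noteq> (\<psi> y + 2) mod 3" if x: "x \<in> Lv k" and y: "y \<in> Lv (Suc k)" for x y
  proof -
    have "x \<noteq> y" using x y unfolding Lv_def by auto
    then have "lt x y \<longleftrightarrow> (\<psi> x, \<psi> y) \<in> crown6_rel" using ord x y unfolding lt_iff by auto
    also have "\<dots> \<longleftrightarrow> \<psi> x \<noteq> (\<psi> y + 2) mod 3"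
    proof -
      have "\<psi> y \<in> \<psi> ` ?A" using y by blast
      then have "\<psi> y \<le> 5" using img by simp
      then show ?thesis using c6c[of "\<psi> x" "\<psi> y"] lo[OF x] hi[OF y] by blast
    qed
    finally show ?thesis .
  qed
  show ?thesis using inj e1 e2 rel by blast
qed

end

definition rM :: "nat \<Rightarrow> ((nat \<times> nat) \<times> (nat \<times> nat)) set" where
  "rM n = {(x, y). x \<in> Mc n \<and> y \<in> Mc n \<and> sle x y}"

lemma mod3_cases: "(a::nat) < 3 \<Longrightarrow> a = 0 \<or> a = 1 \<or> a = 2" by auto

lemma conv21: "(a::nat) < 3 \<Longrightarrow> b < 3 \<Longrightarrow> (a \<noteq> (b + 2) mod 3 \<longleftrightarrow> b \<noteq> (a + 1) mod 3)"
proof -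
  assume "a < 3" "b < 3"
  then have "a = 0 \<or> a = 1 \<or> a = 2" "b = 0 \<or> b = 1 \<or> b = 2" by auto
  then show ?thesis by (elim disjE) simp_all
qed

lemma exc: "(a::nat) < 3 \<Longrightarrow> b < 3 \<Longrightarrow> \<exists>c\<in>{0, 1, 2::nat}. a \<noteq> (c + 2) mod 3 \<and> c \<noteq> (b + 2) mod 3"
proof -
  assume "a < 3" "b < 3"
  then have "a = 0 \<or> a = 1 \<or> a = 2" "b = 0 \<or> b = 1 \<or> b = 2" by auto
  then show ?thesis by (elim disjE) simp_all
qed

lemma v_aux: "(u::nat) < 3 \<Longrightarrow> (3 + (u + 1) mod 3 + 2) mod 3 = u \<and> 3 + (u + 1) mod 3 \<in> {3, 4, 5}"
proof -
  assume "u < 3"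
  then have "u = 0 \<or> u = 1 \<or> u = 2" by auto
  then show ?thesis by (elim disjE) simp_all
qed

lemma v_uniq: "(w::nat) \<in> {3, 4, 5} \<Longrightarrow> u < 3 \<Longrightarrow> u = (w + 2) mod 3 \<Longrightarrow> w = 3 + (u + 1) mod 3"
proof -
  assume "w \<in> {3, 4, 5}" "u < 3" "u = (w + 2) mod 3"
  moreover have "w = 3 \<or> w = 4 \<or> w = 5" using calculation by auto
  ultimately show ?thesis by (elim disjE) simp_all
qed

lemma b12: "(b::nat) < 3 \<Longrightarrow> (b + 1) mod 3 \<noteq> (b + 2) mod 3 \<and> (b + 1) mod 3 < 3"
proof -
  assume "b < 3"
  then have "b = 0 \<or> b = 1 \<or> b = 2" by auto
  then show ?thesis by (elim disjE) simp_all
qed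

context stk
begin

lemma LvS: "Lv k \<subseteq> S" unfolding Lv_def by auto

lemma finLv: "finite (Lv k)" using fin LvS finite_subset by blast

lemma CP3:
  assumes k: "k < n" and x: "x \<in> Lv k"
  shows "\<exists>!y. y \<in> Lv (Suc k) \<and> \<not> lt x y"
proof -
  obtain \<psi> :: "'a \<Rightarrow> nat" where inj: "inj_on \<psi> (Lv k \<union> Lv (Suc k))" and e1: "\<psi> ` Lv k = {0, 1, 2}"
    and e2: "\<psi> ` Lv (Suc k) = {3, 4, 5}"
    and rel: "\<forall>x\<in>Lv k. \<forall>y\<in>Lv (Suc k). lt x y \<longleftrightarrow> \<psi> x \<noteq> (\<psi> y + 2) mod 3"
    using crown_k[OF k] by blast
  have "\<psi> x \<in> {0, 1, 2}" using e1 x by blast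
  then have px: "\<psi> x < 3" by auto
  let ?v = "3 + (\<psi> x + 1) mod 3"
  have va: "(?v + 2) mod 3 = \<psi> x \<and> ?v \<in> {3, 4, 5}" by (rule v_aux[OF px])
  then have "?v \<in> {3, 4, 5}" by blast
  then have "?v \<in> \<psi> ` Lv (Suc k)" unfolding e2 .
  then obtain y where y0: "?v = \<psi> y" "y \<in> Lv (Suc k)" by (rule imageE)
  then have y: "y \<in> Lv (Suc k)" "\<psi> y = ?v" by simp_all
  have "lt x y \<longleftrightarrow> \<psi> x \<noteq> (\<psi> y + 2) mod 3" using rel x y(1) by blast
  then have ny: "\<not> lt x y" using y(2) va by simp
  show ?thesis
  proof (rule ex1I[of _ y])
    show "y \<in> Lv (Suc k) \<and> \<not> lt x y" using y ny by simp
    fix y' assume y': "y' \<in> Lv (Suc k) \<and> \<not> lt x y'"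
    have "lt x y' \<longleftrightarrow> \<psi> x \<noteq> (\<psi> y' + 2) mod 3" using rel x y' by blast
    then have h1: "\<psi> x = (\<psi> y' + 2) mod 3" using y' by blast
    have "\<psi> y' \<in> \<psi> ` Lv (Suc k)" using y' by blast
    then have h2: "\<psi> y' \<in> {3, 4, 5}" unfolding e2 .
    have "\<psi> y' = ?v" by (rule v_uniq[OF h2 px h1])
    then have "\<psi> y' = \<psi> y" using y by simp
    moreover have "y' \<in> Lv k \<union> Lv (Suc k)" "y \<in> Lv k \<union> Lv (Suc k)" using y y' by blast+
    ultimately show "y' = y" using inj_onD[OF inj] by blast
  qed
qed

lemma CP1:
  assumes k: "k < n" and y: "y \<in> Lv (Suc k)" and x: "x \<in> Lv k" and x': "x' \<in> Lv k"
    and nx: "\<not> lt x y" and nx': "\<not> lt x' y"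
  shows "x = x'"
proof -
  obtain \<psi> :: "'a \<Rightarrow> nat" where inj: "inj_on \<psi> (Lv k \<union> Lv (Suc k))"
    and rel: "\<forall>x\<in>Lv k. \<forall>y\<in>Lv (Suc k). lt x y \<longleftrightarrow> \<psi> x \<noteq> (\<psi> y + 2) mod 3"
    using crown_k[OF k] by blast
  have "lt x y \<longleftrightarrow> \<psi> x \<noteq> (\<psi> y + 2) mod 3" "lt x' y \<longleftrightarrow> \<psi> x' \<noteq> (\<psi> y + 2) mod 3"
    using rel x x' y by blast+
  then have "\<psi> x = \<psi> x'" using nx nx' by simp
  moreover have "x \<in> Lv k \<union> Lv (Suc k)" "x' \<in> Lv k \<union> Lv (Suc k)" using x x' by blast+
  ultimately show ?thesis using inj_onD[OF inj] by blast
qed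

lemma card3: assumes "k \<le> n" shows "card (Lv k) = 3"
proof (cases "k < n")
  case True
  obtain \<psi> :: "'a \<Rightarrow> nat" where inj: "inj_on \<psi> (Lv k \<union> Lv (Suc k))" and e1: "\<psi> ` Lv k = {0, 1, 2}"
    using crown_k[OF True] by blast
  have "inj_on \<psi> (Lv k)" using inj by (rule inj_on_subset) auto
  then have "card (\<psi> ` Lv k) = card (Lv k)" by (rule card_image)
  then show ?thesis using e1 by simp
next
  case False
  then have kn: "k = n" using assms by simp
  obtain m where m: "n = Suc m" using n1 by (cases n) auto
  then have mn: "m < n" by simp
  obtain \<psi> :: "'a \<Rightarrow> nat" where inj: "inj_on \<psi> (Lv m \<union> Lv (Suc m))" and e2: "\<psi> ` Lv (Suc m) = {3, 4, 5}"
    using crown_k[OF mn] by blast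
  have "inj_on \<psi> (Lv (Suc m))" using inj by (rule inj_on_subset) auto
  then have "card (\<psi> ` Lv (Suc m)) = card (Lv (Suc m))" by (rule card_image)
  then show ?thesis using e2 kn m by simp
qed

primrec lab :: "nat \<Rightarrow> nat \<Rightarrow> 'a" where
  "lab 0 = (SOME h. bij_betw h {0..<3} (Lv 0))"
| "lab (Suc k) = (\<lambda>a. THE y. y \<in> Lv (Suc k) \<and> \<not> lt (lab k ((a + 2) mod 3)) y)"

lemma lab_Suc:
  assumes k: "k < n" and b: "bij_betw (lab k) {0..<3} (Lv k)" and a: "a < 3"
  shows "lab (Suc k) a \<in> Lv (Suc k) \<and> \<not> lt (lab k ((a + 2) mod 3)) (lab (Suc k) a)"
proof -
  have "lab k ((a + 2) mod 3) \<in> Lv k" using b bij_betwE by fastforce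
  from theI'[OF CP3[OF k this]] show ?thesis by simp
qed

lemma lab_bij: "k \<le> n \<Longrightarrow> bij_betw (lab k) {0..<3} (Lv k)"
proof (induction k)
  case 0
  have "\<exists>h. bij_betw h {0..<card (Lv 0)} (Lv 0)" using finLv ex_bij_betw_nat_finite by blast
  then have "\<exists>h. bij_betw h {0..<3::nat} (Lv 0)" using card3[of 0] by simp
  then show ?case unfolding lab.simps by (rule someI_ex)
next
  case (Suc k)
  then have k: "k < n" by simp
  have b: "bij_betw (lab k) {0..<3} (Lv k)" using Suc by simp
  have bin: "\<And>c. c < 3 \<Longrightarrow> lab k c \<in> Lv k"
  proof -
    fix c :: nat assume "c < 3"
    then have "c \<in> {0..<3}" by simp
    then show "lab k c \<in> Lv k" using bij_betwE[OF b] by blast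
  qed
  have binj: "inj_on (lab k) {0..<3}" using bij_betw_imp_inj_on[OF b] .
  have mem: "\<And>a. a < 3 \<Longrightarrow> lab (Suc k) a \<in> Lv (Suc k)" using lab_Suc[OF k b] by blast
  have inj: "inj_on (lab (Suc k)) {0..<3}"
  proof (rule inj_onI)
    fix a a' assume a: "a \<in> {0..<3}" and a': "a' \<in> {0..<3}" and eq: "lab (Suc k) a = lab (Suc k) a'"
    have a3: "a < 3" "a' < 3" using a a' by auto
    have n1: "\<not> lt (lab k ((a + 2) mod 3)) (lab (Suc k) a)" using lab_Suc[OF k b a3(1)] by blast
    have n2': "\<not> lt (lab k ((a' + 2) mod 3)) (lab (Suc k) a')" using lab_Suc[OF k b a3(2)] by blast
    have n2: "\<not> lt (lab k ((a' + 2) mod 3)) (lab (Suc k) a)" using n2' eq by simp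
    have m3: "(a + 2) mod 3 < 3" "(a' + 2) mod 3 < 3" by simp_all
    have "lab k ((a + 2) mod 3) = lab k ((a' + 2) mod 3)"
      by (rule CP1[OF k mem[OF a3(1)] bin[OF m3(1)] bin[OF m3(2)] n1 n2])
    moreover have "(a + 2) mod 3 \<in> {0..<3}" "(a' + 2) mod 3 \<in> {0..<3}" by simp_all
    ultimately have "(a + 2) mod 3 = (a' + 2) mod 3" using inj_onD[OF binj] by blast
    then show "a = a'" using inj2 a3 by blast
  qed
  have sub: "lab (Suc k) ` {0..<3} \<subseteq> Lv (Suc k)" using mem by auto
  have c1: "card (lab (Suc k) ` {0..<3}) = 3" using card_image[OF inj] by simp
  have c2: "card (Lv (Suc k)) = 3" using card3[OF Suc.prems] .
  have "lab (Suc k) ` {0..<3} = Lv (Suc k)"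
    using card_subset_eq[OF finLv sub] c1 c2 by simp
  then show ?case using inj unfolding bij_betw_def by blast
qed

lemma lab_in: "k \<le> n \<Longrightarrow> a < 3 \<Longrightarrow> lab k a \<in> Lv k"
proof -
  assume "k \<le> n" "a < 3"
  then have "bij_betw (lab k) {0..<3} (Lv k)" "a \<in> {0..<3}" using lab_bij by auto
  then show ?thesis using bij_betwE by blast
qed

lemma lab_inj: "k \<le> n \<Longrightarrow> a < 3 \<Longrightarrow> b < 3 \<Longrightarrow> lab k a = lab k b \<Longrightarrow> a = b"
proof -
  assume H: "k \<le> n" "a < 3" "b < 3" "lab k a = lab k b"
  have i: "inj_on (lab k) {0..<3}" by (rule bij_betw_imp_inj_on[OF lab_bij[OF H(1)]])
  have "a \<in> {0..<3}" "b \<in> {0..<3}" using H by auto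
  from inj_onD[OF i H(4) this] show "a = b" .
qed

lemma E2:
  assumes k: "k < n" and a: "a < 3" and b: "b < 3"
  shows "lt (lab k a) (lab (Suc k) b) \<longleftrightarrow> a \<noteq> (b + 2) mod 3"
proof -
  have bj: "bij_betw (lab k) {0..<3} (Lv k)" using lab_bij k by simp
  have y: "lab (Suc k) b \<in> Lv (Suc k)" and ny: "\<not> lt (lab k ((b + 2) mod 3)) (lab (Suc k) b)"
    using lab_Suc[OF k bj b] by auto
  show ?thesis
  proof
    assume "lt (lab k a) (lab (Suc k) b)"
    then show "a \<noteq> (b + 2) mod 3" using ny by auto
  next
    assume ne: "a \<noteq> (b + 2) mod 3"
    show "lt (lab k a) (lab (Suc k) b)"
    proof (rule ccontr)
      assume "\<not> lt (lab k a) (lab (Suc k) b)"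
      then have "lab k a = lab k ((b + 2) mod 3)"
        using CP1[OF k y lab_in[of k a] lab_in[of k "(b + 2) mod 3"] _ ny] k a by simp
      then have "a = (b + 2) mod 3" using lab_inj[of k a "(b + 2) mod 3"] k a by simp
      then show False using ne by simp
    qed
  qed
qed

lemma E3: "k + 2 \<le> l \<Longrightarrow> l \<le> n \<Longrightarrow> a < 3 \<Longrightarrow> b < 3 \<Longrightarrow> lt (lab k a) (lab l b)"
proof (induction l arbitrary: b rule: dec_induct)
  case base
  obtain c where c: "c \<in> {0, 1, 2::nat}" "a \<noteq> (c + 2) mod 3" "c \<noteq> (b + 2) mod 3"
    using exc[OF base(2) base(3)] by blast
  have c3: "c < 3" using c(1) by auto
  have k1: "k < n" "Suc k < n" using base(1) by auto
  have l1: "lt (lab k a) (lab (Suc k) c)" using iffD2[OF E2[OF k1(1) base(2) c3] c(2)] .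
  have l2: "lt (lab (Suc k) c) (lab (Suc (Suc k)) b)" using iffD2[OF E2[OF k1(2) c3 base(3)] c(3)] .
  have "lt (lab k a) (lab (Suc (Suc k)) b)" using lt_trans[OF l1 l2] .
  then show ?case by (simp add: numeral_2_eq_2)
next
  case (step l)
  let ?c = "(b + 1) mod 3"
  have bc: "?c \<noteq> (b + 2) mod 3" "?c < 3" using b12[OF step.prems(3)] by auto
  have ln: "l < n" using step by simp
  have l1: "lt (lab k a) (lab l ?c)" using step.IH[OF _ step.prems(2) bc(2)] step.prems(1) ln by simp
  have l2: "lt (lab l ?c) (lab (Suc l) b)" using iffD2[OF E2[OF ln bc(2) step.prems(3)] bc(1)] .
  show ?case using lt_trans[OF l1 l2] .
qed

end

context stk
begin

definition Em :: "nat \<times> nat \<Rightarrow> 'a" where "Em x = lab (snd x) (fst x)"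

lemma Lv_rk: "x \<in> Lv k \<Longrightarrow> rk x = k \<and> x \<in> S" unfolding Lv_def by simp

lemma lab_rel:
  assumes a: "a < 3" and b: "b < 3" and k: "k \<le> n" and l: "l \<le> n"
  shows "(lab k a, lab l b) \<in> r \<longleftrightarrow> sle (a, k) (b, l)"
proof -
  have u: "rk (lab k a) = k" "lab k a \<in> S" using Lv_rk[OF lab_in[OF k a]] by auto
  have v: "rk (lab l b) = l" "lab l b \<in> S" using Lv_rk[OF lab_in[OF l b]] by auto
  show ?thesis
  proof
    assume H: "(lab k a, lab l b) \<in> r"
    show "sle (a, k) (b, l)"
    proof (cases "lab k a = lab l b")
      case True
      then have kl: "k = l" using u v by metis
      then have "a = b" using lab_inj[OF k a b] True by simp
      then show ?thesis using kl by (simp add: sle_def)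
    next
      case False
      then have ltu: "lt (lab k a) (lab l b)" using H by (simp add: lt_iff)
      then have "k < l" using rk_lt[OF v(2) ltu] u v by simp
      then consider "l = Suc k" | "k + 2 \<le> l" by linarith
      then show ?thesis
      proof cases
        case 1
        have kn: "k < n" using 1 l by simp
        have "a \<noteq> (b + 2) mod 3" using E2[OF kn a b] ltu 1 by simp
        then have "b \<noteq> (a + 1) mod 3" using conv21[OF a b] by simp
        then show ?thesis using 1 by (simp add: sle_def)
      next
        case 2 then show ?thesis by (simp add: sle_def)
      qed
    qed
  next
    assume "sle (a, k) (b, l)"
    then consider "(a, k) = (b, l)" | "k + 2 \<le> l" | "l = Suc k" "b \<noteq> (a + 1) mod 3"
      unfolding sle_def by auto
    then show "(lab k a, lab l b) \<in> r"
    proof cases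
      case 1 then show ?thesis using rrefl u by simp
    next
      case 2 then have "lt (lab k a) (lab l b)" using E3[OF 2 l a b] by simp
      then show ?thesis by (simp add: lt_iff)
    next
      case 3
      have kn: "k < n" using 3 l by simp
      have "a \<noteq> (b + 2) mod 3" using conv21[OF a b] 3 by simp
      then have "lt (lab k a) (lab (Suc k) b)" using E2[OF kn a b] by simp
      then show ?thesis using 3 by (simp add: lt_iff)
    qed
  qed
qed

lemma Em_iso: "order_iso (Mc n) (rM n) S r Em"
  unfolding order_iso_def
proof (intro conjI ballI)
  show "bij_betw Em (Mc n) S"
    unfolding bij_betw_def
  proof
    show "inj_on Em (Mc n)"
    proof (rule inj_onI)
      fix x y assume x: "x \<in> Mc n" and y: "y \<in> Mc n" and eq: "Em x = Em y"
      obtain a k where xa: "x = (a, k)" by (cases x)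
      obtain b l where yb: "y = (b, l)" by (cases y)
      have a: "a < 3" "k \<le> n" using x xa by (simp_all add: Mc_def)
      have b: "b < 3" "l \<le> n" using y yb by (simp_all add: Mc_def)
      have eq': "lab k a = lab l b" using eq xa yb by (simp add: Em_def)
      have "rk (lab k a) = k" "rk (lab l b) = l"
        using Lv_rk[OF lab_in[OF a(2) a(1)]] Lv_rk[OF lab_in[OF b(2) b(1)]] by auto
      then have kl: "k = l" using eq' by simp
      then have "a = b" using lab_inj[OF a(2) a(1) b(1)] eq' by simp
      then show "x = y" using xa yb kl by simp
    qed
    show "Em ` Mc n = S"
    proof
      show "Em ` Mc n \<subseteq> S"
      proof
        fix p assume "p \<in> Em ` Mc n"
        then obtain x where x: "x \<in> Mc n" "p = Em x" by blast
        have "fst x < 3" "snd x \<le> n" using x(1) by (simp_all add: Mc_def)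
        then have "lab (snd x) (fst x) \<in> Lv (snd x)" using lab_in by blast
        then show "p \<in> S" using x(2) LvS unfolding Em_def by blast
      qed
      show "S \<subseteq> Em ` Mc n"
      proof
        fix p assume p: "p \<in> S"
        let ?k = "rk p"
        have kn: "?k \<le> n" using rk_le_n[OF p] .
        have "p \<in> Lv ?k" using p unfolding Lv_def by simp
        then have "p \<in> lab ?k ` {0..<3}" using bij_betw_imp_surj_on[OF lab_bij[OF kn]] by simp
        then obtain a where a: "a \<in> {0..<3}" "p = lab ?k a" by blast
        have "(a, ?k) \<in> Mc n" using a kn by (simp add: Mc_def)
        moreover have "p = Em (a, ?k)" using a by (simp add: Em_def)
        ultimately show "p \<in> Em ` Mc n" by blast
      qed
    qed
  qed
next
  fix x y assume x: "x \<in> Mc n" and y: "y \<in> Mc n"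
  obtain a k where xa: "x = (a, k)" by (cases x)
  obtain b l where yb: "y = (b, l)" by (cases y)
  have a: "a < 3" "k \<le> n" using x xa by (simp_all add: Mc_def)
  have b: "b < 3" "l \<le> n" using y yb by (simp_all add: Mc_def)
  have "(x, y) \<in> rM n \<longleftrightarrow> sle x y" using x y by (simp add: rM_def)
  also have "\<dots> \<longleftrightarrow> (Em x, Em y) \<in> r" using lab_rel[OF a(1) b(1) a(2) b(2)] xa yb by (simp add: Em_def)
  finally show "(x, y) \<in> rM n \<longleftrightarrow> (Em x, Em y) \<in> r" .
qed

end

section \<open>General lemmas on order isomorphisms\<close>

lemma oi_bij: "order_iso A a B b f \<Longrightarrow> bij_betw f A B" unfolding order_iso_def by blast
lemma oi_ord: "order_iso A a B b f \<Longrightarrow> x \<in> A \<Longrightarrow> y \<in> A \<Longrightarrow> (x, y) \<in> a \<longleftrightarrow> (f x, f y) \<in> b"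
  unfolding order_iso_def by blast

lemma oi_inv:
  assumes "order_iso A a B b f"
  shows "order_iso B b A a (inv_into A f)"
proof -
  have bj: "bij_betw f A B" using oi_bij[OF assms] .
  have bj2: "bij_betw (inv_into A f) B A" using bij_betw_inv_into[OF bj] .
  have "(x, y) \<in> b \<longleftrightarrow> (inv_into A f x, inv_into A f y) \<in> a" if x: "x \<in> B" and y: "y \<in> B" for x y
  proof -
    have xi: "inv_into A f x \<in> A" "f (inv_into A f x) = x" using bj x bij_betwE bj2 bij_betw_inv_into_right by fastforce+
    have yi: "inv_into A f y \<in> A" "f (inv_into A f y) = y" using bj y bij_betwE bj2 bij_betw_inv_into_right by fastforce+
    show ?thesis using oi_ord[OF assms xi(1) yi(1)] xi(2) yi(2) by simp
  qed
  then show ?thesis unfolding order_iso_def using bj2 by blast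
qed

lemma oi_comp:
  assumes "order_iso A a B b f" "order_iso B b C c g"
  shows "order_iso A a C c (g \<circ> f)"
proof -
  have bj: "bij_betw (g \<circ> f) A C" using bij_betw_trans oi_bij[OF assms(1)] oi_bij[OF assms(2)] by blast
  have "(x, y) \<in> a \<longleftrightarrow> ((g \<circ> f) x, (g \<circ> f) y) \<in> c" if x: "x \<in> A" and y: "y \<in> A" for x y
  proof -
    have "f x \<in> B" "f y \<in> B" using oi_bij[OF assms(1)] x y bij_betwE by blast+
    then show ?thesis using oi_ord[OF assms(1) x y] oi_ord[OF assms(2)] by simp
  qed
  then show ?thesis unfolding order_iso_def using bj by blast
qed

lemma oi_restr:
  assumes "order_iso A a B b f" "Q \<subseteq> A"
  shows "order_iso Q (Restr a Q) (f ` Q) (Restr b (f ` Q)) f"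
proof -
  have "inj_on f A" using oi_bij[OF assms(1)] bij_betw_imp_inj_on by blast
  then have "inj_on f Q" using assms(2) inj_on_subset by blast
  then have bj: "bij_betw f Q (f ` Q)" unfolding bij_betw_def by blast
  have "(x, y) \<in> Restr a Q \<longleftrightarrow> (f x, f y) \<in> Restr b (f ` Q)" if x: "x \<in> Q" and y: "y \<in> Q" for x y
  proof -
    have "x \<in> A" "y \<in> A" using x y assms(2) by blast+
    then have "(x, y) \<in> a \<longleftrightarrow> (f x, f y) \<in> b" using oi_ord[OF assms(1)] by blast
    moreover have "f x \<in> f ` Q" "f y \<in> f ` Q" using x y by blast+
    ultimately show ?thesis using x y by blast
  qed
  then show ?thesis unfolding order_iso_def using bj by blast
qed

lemma aut_transfer:
  assumes iso: "order_iso A a B b f" and aut: "automorphic B b"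
  shows "automorphic A a"
proof -
  obtain g where g: "order_iso B b B b g" and fp: "\<forall>x\<in>B. g x \<noteq> x" using aut unfolding automorphic_def by blast
  let ?h = "inv_into A f \<circ> (g \<circ> f)"
  have "order_iso A a A a ?h" using oi_comp[OF oi_comp[OF iso g] oi_inv[OF iso]] by (simp add: comp_assoc)
  moreover have "\<forall>x\<in>A. ?h x \<noteq> x"
  proof
    fix x assume x: "x \<in> A"
    have bj: "bij_betw f A B" using oi_bij[OF iso] .
    have fx: "f x \<in> B" using bj x bij_betwE by blast
    have gfx: "g (f x) \<in> B" using oi_bij[OF g] fx bij_betwE by blast
    have e: "f (inv_into A f (g (f x))) = g (f x)" using bj gfx bij_betw_inv_into_right by fastforce
    show "?h x \<noteq> x"
    proof
      assume "?h x = x"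
      then have "f (?h x) = f x" by simp
      then have "g (f x) = f x" using e by simp
      then show False using fp fx by blast
    qed
  qed
  ultimately show ?thesis unfolding automorphic_def by blast
qed

section \<open>Towers are automorphic\<close>

definition rot :: "(nat \<times> nat) set \<Rightarrow> nat \<times> nat \<Rightarrow> nat \<times> nat" where
  "rot A x = (if A = {(0, 0), (1, 0)} then (1 - fst x, snd x) else ((fst x + 1) mod 3, snd x))"

lemma rot3: "(a::nat) \<le> 2 \<Longrightarrow> (((a + 1) mod 3 + 1) mod 3 + 1) mod 3 = a \<and> (a + 1) mod 3 \<le> 2 \<and> (a + 1) mod 3 \<noteq> a
   \<and> ((a + 2) mod 3 + 1) mod 3 = a \<and> (a + 2) mod 3 \<le> 2"
proof -
  assume "a \<le> 2"
  then have "a = 0 \<or> a = 1 \<or> a = 2" by auto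
  then show ?thesis by (elim disjE) simp_all
qed

lemma sec_rot:
  assumes "is_section A s"
  shows "bij_betw (rot A) A A \<and> (\<forall>x\<in>A. \<forall>y\<in>A. (x, y) \<in> s \<longleftrightarrow> (rot A x, rot A y) \<in> s) \<and> (\<forall>x\<in>A. rot A x \<noteq> x)"
  using assms unfolding is_section_def
proof
  assume H: "A = {(0, 0), (1, 0)} \<and> s = Id_on A"
  then have HA: "A = {(0, 0), (1, 0)}" and Hs: "s = Id_on {(0, 0), (1, 0)}" by simp_all
  have r1: "rot {(0, 0), (1, 0)} (0, 0) = (1, 0)" and r2: "rot {(0, 0), (1, 0)} (1, 0) = (0, 0)"
    by (simp_all add: rot_def)
  have img0: "rot {(0, 0), (1, 0)} ` {(0, 0), (1, 0)} = {(1, 0), (0, 0)}"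
    by (simp only: image_insert image_empty r1 r2)
  have img: "rot {(0, 0), (1, 0)} ` {(0, 0), (1, 0)} = {(0, 0), (1, 0)}"
    using img0 by (metis insert_commute)
  have inj: "inj_on (rot {(0, 0), (1, 0)}) {(0, 0), (1, 0)}" using r1 r2 unfolding inj_on_def by auto
  have bj: "bij_betw (rot A) A A" using img inj HA by (simp add: bij_betw_def)
  have ord: "\<forall>x\<in>A. \<forall>y\<in>A. (x, y) \<in> s \<longleftrightarrow> (rot A x, rot A y) \<in> s" unfolding HA Hs using r1 r2 by (auto simp: Id_on_def)
  have fp: "\<forall>x\<in>A. rot A x \<noteq> x" unfolding HA using r1 r2 by auto
  show ?thesis using bj ord fp by blast
next
  assume "\<exists>m\<ge>1. A = {0..2} \<times> {0..m} \<and> partial_order_on A s \<and>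
        (\<forall>i\<le>2. \<forall>k l. k < l \<and> l \<le> m \<longrightarrow> ((i, k), (i, l)) \<in> strict s) \<and>
        (\<forall>k\<le>m. \<forall>i\<le>2. \<forall>j\<le>2. i \<noteq> j \<longrightarrow> ((i, k), (j, k)) \<notin> s) \<and>
        (\<forall>i k j l. ((i, k), (j, l)) \<in> strict s \<longrightarrow>
            (((i + 1) mod 3, k), ((j + 1) mod 3, l)) \<in> strict s) \<and>
        (\<forall>k<m. \<exists>i\<le>2. \<exists>j\<le>2. ((i, k), (j, Suc k)) \<notin> strict s)"
  then obtain m where mm: "m \<ge> 1 \<and> A = {0..2} \<times> {0..m} \<and> partial_order_on A s \<and>
        (\<forall>i\<le>2. \<forall>k l. k < l \<and> l \<le> m \<longrightarrow> ((i, k), (i, l)) \<in> strict s) \<and>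
        (\<forall>k\<le>m. \<forall>i\<le>2. \<forall>j\<le>2. i \<noteq> j \<longrightarrow> ((i, k), (j, k)) \<notin> s) \<and>
        (\<forall>i k j l. ((i, k), (j, l)) \<in> strict s \<longrightarrow>
            (((i + 1) mod 3, k), ((j + 1) mod 3, l)) \<in> strict s) \<and>
        (\<forall>k<m. \<exists>i\<le>2. \<exists>j\<le>2. ((i, k), (j, Suc k)) \<notin> strict s)"
    by (rule exE)
  have A: "A = {0..2} \<times> {0..m}" using mm[THEN conjunct2, THEN conjunct1] .
  have po: "partial_order_on A s" using mm[THEN conjunct2, THEN conjunct2, THEN conjunct1] .
  have sh: "\<forall>i k j l. ((i, k), (j, l)) \<in> strict s \<longrightarrow> (((i + 1) mod 3, k), ((j + 1) mod 3, l)) \<in> strict s"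
    using mm[THEN conjunct2, THEN conjunct2, THEN conjunct2, THEN conjunct2, THEN conjunct2, THEN conjunct1] .
  have ne: "A \<noteq> {(0, 0), (1, 0)}"
  proof
    assume "A = {(0, 0), (1, 0)}"
    moreover have "(2, 0) \<in> A" using A by simp
    ultimately show False by simp
  qed
  then have R: "rot A x = ((fst x + 1) mod 3, snd x)" for x by (simp add: rot_def)
  have memA: "x \<in> A \<longleftrightarrow> fst x \<le> 2 \<and> snd x \<le> m" for x using A by (cases x) auto
  have rA: "rot A x \<in> A" if "x \<in> A" for x using that rot3[of "fst x"] R memA by simp
  have rrr: "rot A (rot A (rot A x)) = x" if "x \<in> A" for x using that rot3[of "fst x"] R memA by (cases x) simp
  have inj: "inj_on (rot A) A"
  proof (rule inj_onI)
    fix x y assume "x \<in> A" "y \<in> A" "rot A x = rot A y"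
    then show "x = y" using rrr by metis
  qed
  have img: "rot A ` A = A"
  proof
    show "rot A ` A \<subseteq> A" using rA by blast
    show "A \<subseteq> rot A ` A"
    proof
      fix x assume x: "x \<in> A"
      have "rot A (rot A x) \<in> A" using rA x by blast
      moreover have "rot A (rot A (rot A x)) = x" using rrr x by blast
      ultimately show "x \<in> rot A ` A" by (metis imageI)
    qed
  qed
  have bj: "bij_betw (rot A) A A" using img inj by (simp add: bij_betw_def)
  have refl: "(x, x) \<in> s" if "x \<in> A" for x
    using po that unfolding partial_order_on_def preorder_on_def refl_on_def by blast
  have shr: "(x, y) \<in> strict s \<Longrightarrow> (rot A x, rot A y) \<in> strict s" for x y
    using sh R by (cases x, cases y) auto
  have ord: "(x, y) \<in> s \<longleftrightarrow> (rot A x, rot A y) \<in> s" if x: "x \<in> A" and y: "y \<in> A" for x y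
  proof
    assume xy: "(x, y) \<in> s"
    show "(rot A x, rot A y) \<in> s"
    proof (cases "x = y")
      case True then show ?thesis using refl rA x by simp
    next
      case False
      then have "(x, y) \<in> strict s" using xy by (simp add: strict_def)
      then show ?thesis using shr by (simp add: strict_def)
    qed
  next
    assume xy: "(rot A x, rot A y) \<in> s"
    show "(x, y) \<in> s"
    proof (cases "x = y")
      case True then show ?thesis using refl x by simp
    next
      case False
      then have "rot A x \<noteq> rot A y" using inj x y by (metis inj_onD)
      then have "(rot A x, rot A y) \<in> strict s" using xy by (simp add: strict_def)
      then have "(rot A (rot A (rot A x)), rot A (rot A (rot A y))) \<in> strict s" using shr by blast
      then show ?thesis using rrr x y by (simp add: strict_def)
    qed
  qed
  have fp: "\<forall>x\<in>A. rot A x \<noteq> x"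
  proof
    fix x assume "x \<in> A"
    then have "fst x \<le> 2" using memA by blast
    then have "(fst x + 1) mod 3 \<noteq> fst x" using rot3 by blast
    then show "rot A x \<noteq> x" using R by (metis fst_conv)
  qed
  show ?thesis using bj ord fp by blast
qed

lemma tower_aut:
  assumes secs: "\<forall>p\<in>set ps. is_section (fst p) (snd p)"
  shows "automorphic (ord_sum_carrier ps) (ord_sum_rel ps)"
proof -
  let ?C = "ord_sum_carrier ps"
  define \<tau> where "\<tau> = (\<lambda>(k::nat, x). (k, rot (fst (ps ! k)) x))"
  have sr: "k < length ps \<Longrightarrow> bij_betw (rot (fst (ps ! k))) (fst (ps ! k)) (fst (ps ! k)) \<and>
      (\<forall>x\<in>fst (ps ! k). \<forall>y\<in>fst (ps ! k). (x, y) \<in> snd (ps ! k) \<longleftrightarrow> (rot (fst (ps ! k)) x, rot (fst (ps ! k)) y) \<in> snd (ps ! k)) \<and>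
      (\<forall>x\<in>fst (ps ! k). rot (fst (ps ! k)) x \<noteq> x)" for k
    using sec_rot secs nth_mem by blast
  have memC: "(k, x) \<in> ?C \<longleftrightarrow> k < length ps \<and> x \<in> fst (ps ! k)" for k x by (simp add: ord_sum_carrier_def)
  have tin: "\<tau> p \<in> ?C" if "p \<in> ?C" for p
  proof -
    obtain k x where p: "p = (k, x)" by (cases p)
    then have "k < length ps" "x \<in> fst (ps ! k)" using that memC by auto
    then have "rot (fst (ps ! k)) x \<in> fst (ps ! k)" using sr bij_betwE by blast
    then show ?thesis using p \<open>k < length ps\<close> memC by (simp add: \<tau>_def)
  qed
  have inj: "inj_on \<tau> ?C"
  proof (rule inj_onI)
    fix p q assume p: "p \<in> ?C" and q: "q \<in> ?C" and e: "\<tau> p = \<tau> q"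
    obtain k x where pk: "p = (k, x)" by (cases p)
    obtain l y where ql: "q = (l, y)" by (cases q)
    have tp: "\<tau> p = (k, rot (fst (ps ! k)) x)" using pk by (simp add: \<tau>_def)
    have tq: "\<tau> q = (l, rot (fst (ps ! l)) y)" using ql by (simp add: \<tau>_def)
    have e2: "(k, rot (fst (ps ! k)) x) = (l, rot (fst (ps ! l)) y)" using e tp tq by metis
    then have kl: "k = l" and e3: "rot (fst (ps ! k)) x = rot (fst (ps ! l)) y" by (metis prod.inject)+
    have ee: "rot (fst (ps ! k)) x = rot (fst (ps ! k)) y" using e3 kl by metis
    have "k < length ps" "x \<in> fst (ps ! k)" "y \<in> fst (ps ! k)" using p q pk ql kl memC by auto
    then have "x = y" using sr ee bij_betw_imp_inj_on inj_onD by metis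
    then show "p = q" using pk ql kl by simp
  qed
  have img: "\<tau> ` ?C = ?C"
  proof
    show "\<tau> ` ?C \<subseteq> ?C" using tin by blast
    show "?C \<subseteq> \<tau> ` ?C"
    proof
      fix p assume p: "p \<in> ?C"
      obtain k x where pk: "p = (k, x)" by (cases p)
      have k: "k < length ps" and x: "x \<in> fst (ps ! k)" using p pk memC by auto
      have "x \<in> rot (fst (ps ! k)) ` fst (ps ! k)" using sr[OF k] x bij_betw_imp_surj_on by metis
      then obtain y where y: "y \<in> fst (ps ! k)" "x = rot (fst (ps ! k)) y" by blast
      have "(k, y) \<in> ?C" using k y memC by simp
      moreover have "\<tau> (k, y) = p" using pk y by (simp add: \<tau>_def)
      ultimately show "p \<in> \<tau> ` ?C" by (metis imageI)
    qed
  qed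
  have ord: "(p, q) \<in> ord_sum_rel ps \<longleftrightarrow> (\<tau> p, \<tau> q) \<in> ord_sum_rel ps" if p: "p \<in> ?C" and q: "q \<in> ?C" for p q
  proof -
    obtain k x where pk: "p = (k, x)" by (cases p)
    obtain l y where ql: "q = (l, y)" by (cases q)
    have k: "k < length ps" "x \<in> fst (ps ! k)" using p pk memC by auto
    have l: "l < length ps" "y \<in> fst (ps ! l)" using q ql memC by auto
    have tp: "\<tau> p \<in> ?C" "\<tau> q \<in> ?C" using tin p q by blast+
    have "(p, q) \<in> ord_sum_rel ps \<longleftrightarrow> (k = l \<and> (x, y) \<in> snd (ps ! k)) \<or> k < l"
      using p q pk ql by (simp add: ord_sum_rel_def)
    also have "\<dots> \<longleftrightarrow> (k = l \<and> (rot (fst (ps ! k)) x, rot (fst (ps ! k)) y) \<in> snd (ps ! k)) \<or> k < l"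
    proof (cases "k = l")
      case True
      then have "(x, y) \<in> snd (ps ! k) \<longleftrightarrow> (rot (fst (ps ! k)) x, rot (fst (ps ! k)) y) \<in> snd (ps ! k)"
        using sr[OF k(1)] k l by blast
      then show ?thesis by blast
    qed simp
    also have "\<dots> \<longleftrightarrow> (\<tau> p, \<tau> q) \<in> ord_sum_rel ps"
      using tp pk ql by (cases "k = l") (simp_all add: ord_sum_rel_def \<tau>_def)
    finally show ?thesis .
  qed
  have fp: "\<forall>p\<in>?C. \<tau> p \<noteq> p"
  proof
    fix p assume p: "p \<in> ?C"
    obtain k x where pk: "p = (k, x)" by (cases p)
    have k: "k < length ps" "x \<in> fst (ps ! k)" using p pk memC by auto
    then have "rot (fst (ps ! k)) x \<noteq> x" using sr by blast
    then show "\<tau> p \<noteq> p" using pk by (simp add: \<tau>_def)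
  qed
  have "order_iso ?C (ord_sum_rel ps) ?C (ord_sum_rel ps) \<tau>"
    unfolding order_iso_def bij_betw_def using inj img ord by blast
  then show ?thesis unfolding automorphic_def using fp by blast
qed

lemma iso_tower_aut: "iso_to_tower Q q \<Longrightarrow> automorphic Q q"
  unfolding iso_to_tower_def isomorphic_def using tower_aut aut_transfer by blast

section \<open>Standard model: automorphism, retraction, tower\<close>

lemma sig_sle:
  assumes "a < 3" "b < 3"
  shows "sle (a, k) (b, l) \<longleftrightarrow> sle ((a + 1) mod 3, k) ((b + 1) mod 3, l)"
proof -
  have "a = 0 \<or> a = 1 \<or> a = 2" "b = 0 \<or> b = 1 \<or> b = 2" using assms by auto
  then show ?thesis by (elim disjE) (simp_all add: sle_def)
qed

lemma Mc_aut: "automorphic (Mc n) (rM n)"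
proof -
  define \<sigma> where "\<sigma> = (\<lambda>x::nat \<times> nat. ((fst x + 1) mod 3, snd x))"
  have sin: "\<sigma> x \<in> Mc n" if "x \<in> Mc n" for x using that by (simp add: \<sigma>_def Mc_def)
  have sss: "\<sigma> (\<sigma> (\<sigma> x)) = x" if "x \<in> Mc n" for x
  proof -
    have "fst x \<le> 2" using that by (simp add: Mc_def)
    then show ?thesis using rot3[of "fst x"] by (simp add: \<sigma>_def)
  qed
  have inj: "inj_on \<sigma> (Mc n)"
  proof (rule inj_onI)
    fix x y assume "x \<in> Mc n" "y \<in> Mc n" "\<sigma> x = \<sigma> y"
    then show "x = y" using sss by metis
  qed
  have img: "\<sigma> ` Mc n = Mc n"
  proof
    show "\<sigma> ` Mc n \<subseteq> Mc n" using sin by blast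
    show "Mc n \<subseteq> \<sigma> ` Mc n"
    proof
      fix x assume x: "x \<in> Mc n"
      have "\<sigma> (\<sigma> x) \<in> Mc n" using sin x by blast
      moreover have "\<sigma> (\<sigma> (\<sigma> x)) = x" using sss x by blast
      ultimately show "x \<in> \<sigma> ` Mc n" by (metis imageI)
    qed
  qed
  have ord: "(x, y) \<in> rM n \<longleftrightarrow> (\<sigma> x, \<sigma> y) \<in> rM n" if x: "x \<in> Mc n" and y: "y \<in> Mc n" for x y
  proof -
    obtain a k where xa: "x = (a, k)" by (cases x)
    obtain b l where yb: "y = (b, l)" by (cases y)
    have a: "a < 3" using x xa by (simp add: Mc_def)
    have b: "b < 3" using y yb by (simp add: Mc_def)
    have "(x, y) \<in> rM n \<longleftrightarrow> sle x y" using x y by (simp add: rM_def)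
    also have "\<dots> \<longleftrightarrow> sle (\<sigma> x) (\<sigma> y)" using sig_sle[OF a b] xa yb by (simp add: \<sigma>_def)
    also have "\<dots> \<longleftrightarrow> (\<sigma> x, \<sigma> y) \<in> rM n" using sin x y by (simp add: rM_def)
    finally show ?thesis .
  qed
  have fp: "\<forall>x\<in>Mc n. \<sigma> x \<noteq> x"
  proof
    fix x assume "x \<in> Mc n"
    then have "fst x \<le> 2" by (simp add: Mc_def)
    then have "(fst x + 1) mod 3 \<noteq> fst x" using rot3 by blast
    then show "\<sigma> x \<noteq> x" by (metis \<sigma>_def fst_conv)
  qed
  have "order_iso (Mc n) (rM n) (Mc n) (rM n) \<sigma>"
    unfolding order_iso_def bij_betw_def using inj img ord by blast
  then show ?thesis unfolding automorphic_def using fp by blast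
qed

definition fMr :: "nat \<Rightarrow> nat \<Rightarrow> nat \<Rightarrow> nat \<times> nat" where
  "fMr a r k = (if r = 0 then (if a = 2 then (0, k) else (a, k))
     else if r = 1 then (if a = 0 then (0, k) else if a = 1 then (1, k + 1) else (0, k - 1))
     else (if a = 0 then (0, k + 1) else if a = 1 then (1, k) else (0, k - 1)))"

definition fM :: "nat \<times> nat \<Rightarrow> nat \<times> nat" where
  "fM x = fMr (fst x) (snd x mod 3) (snd x)"

definition QM :: "nat \<Rightarrow> (nat \<times> nat) set" where
  "QM n = {x \<in> Mc n. (snd x mod 3 = 0 \<and> fst x \<le> 1) \<or> (snd x mod 3 = 1 \<and> fst x = 0) \<or> (snd x mod 3 = 2 \<and> fst x = 1)}"

lemma dec3: obtains i r where "(k::nat) = 3 * i + r" "r < 3" "k mod 3 = r" "k div 3 = i"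
proof -
  have "k = 3 * (k div 3) + k mod 3" by simp
  moreover have "k mod 3 < 3" by simp
  ultimately show ?thesis using that by blast
qed

lemma fMr_mono:
  assumes a: "a < 3" and b: "b < 3" and r: "r < 3" and s: "s < 3"
    and H: "sle (a, 3 * i + r) (b, 3 * j + s)"
  shows "sle (fMr a r (3 * i + r)) (fMr b s (3 * j + s))"
proof -
  have "a = 0 \<or> a = 1 \<or> a = 2" "b = 0 \<or> b = 1 \<or> b = 2" "r = 0 \<or> r = 1 \<or> r = 2" "s = 0 \<or> s = 1 \<or> s = 2"
    using a b r s by auto
  then show ?thesis using H by (elim disjE) (simp_all add: sle_def fMr_def, presburger+)
qed

lemma fM_mono:
  assumes x: "x \<in> Mc n" and y: "y \<in> Mc n" and H: "sle x y"
  shows "sle (fM x) (fM y)"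
proof -
  obtain a k where xa: "x = (a, k)" by (cases x)
  obtain b l where yb: "y = (b, l)" by (cases y)
  have a: "a < 3" using x xa by (simp add: Mc_def)
  have b: "b < 3" using y yb by (simp add: Mc_def)
  obtain i r where k: "k = 3 * i + r" "r < 3" "k mod 3 = r" by (rule dec3)
  obtain j s where l: "l = 3 * j + s" "s < 3" "l mod 3 = s" by (rule dec3)
  have "sle (fMr a r (3 * i + r)) (fMr b s (3 * j + s))"
    using fMr_mono[OF a b k(2) l(2)] H xa yb k l by simp
  then show ?thesis using xa yb k l by (simp add: fM_def)
qed

lemma fMr_in:
  assumes a: "a < 3" and r: "r < 3" and kn: "3 * i + r \<le> 3 * N"
  shows "(3 * i + r) mod 3 = r \<and> snd (fMr a r (3 * i + r)) \<le> 3 * N \<and> fst (fMr a r (3 * i + r)) < 3 \<and>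
    ((snd (fMr a r (3 * i + r)) mod 3 = 0 \<and> fst (fMr a r (3 * i + r)) \<le> 1) \<or>
     (snd (fMr a r (3 * i + r)) mod 3 = 1 \<and> fst (fMr a r (3 * i + r)) = 0) \<or>
     (snd (fMr a r (3 * i + r)) mod 3 = 2 \<and> fst (fMr a r (3 * i + r)) = 1))"
proof -
  have "a = 0 \<or> a = 1 \<or> a = 2" "r = 0 \<or> r = 1 \<or> r = 2" using a r by auto
  then show ?thesis using kn by (elim disjE) (simp_all add: fMr_def, presburger+)
qed

lemma fM_in:
  assumes d: "3 dvd n" and x: "x \<in> Mc n"
  shows "fM x \<in> QM n"
proof -
  obtain a k where xa: "x = (a, k)" by (cases x)
  have a: "a < 3" and kn: "k \<le> n" using x xa by (simp_all add: Mc_def)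
  obtain N where N: "n = 3 * N" using d by blast
  obtain i r where k: "k = 3 * i + r" "r < 3" "k mod 3 = r" by (rule dec3)
  have "3 * i + r \<le> 3 * N" using kn k N by simp
  from fMr_in[OF a k(2) this] show ?thesis using xa k N by (simp add: fM_def QM_def Mc_def)
qed

lemma fM_fix:
  assumes x: "x \<in> QM n"
  shows "fM x = x"
proof -
  obtain a k where xa: "x = (a, k)" by (cases x)
  have c: "(k mod 3 = 0 \<and> a \<le> 1) \<or> (k mod 3 = 1 \<and> a = 0) \<or> (k mod 3 = 2 \<and> a = 1)"
    using x xa by (simp add: QM_def)
  then show ?thesis using xa by (auto simp: fM_def fMr_def)
qed

definition chi :: "nat \<times> nat \<Rightarrow> nat \<times> (nat \<times> nat)" where
  "chi x = (2 * (snd x div 3) + (if snd x mod 3 = 0 then 0 else 1), (fst x, 0))"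

definition AC :: "(nat \<times> nat) set \<times> (nat \<times> nat) rel" where
  "AC = ({(0, 0), (1, 0)}, Id_on {(0, 0), (1, 0)})"

definition tps :: "nat \<Rightarrow> ((nat \<times> nat) set \<times> (nat \<times> nat) rel) list" where
  "tps n = replicate (2 * (n div 3) + 1) AC"

lemma tps_sec: "\<forall>p\<in>set (tps n). is_section (fst p) (snd p)"
  by (simp add: tps_def AC_def is_section_def)

lemma tps_len: "length (tps n) = 2 * (n div 3) + 1"
  unfolding tps_def by (rule length_replicate)

lemma tps_nth: "t < 2 * (n div 3) + 1 \<Longrightarrow> tps n ! t = AC"
  unfolding tps_def by (rule nth_replicate)

lemma tps_car: "(t, z) \<in> ord_sum_carrier (tps n) \<longleftrightarrow> t < 2 * (n div 3) + 1 \<and> (z = (0, 0) \<or> z = (1, 0))"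
proof -
  have "(t, z) \<in> ord_sum_carrier (tps n) \<longleftrightarrow> t < 2 * (n div 3) + 1 \<and> z \<in> fst (tps n ! t)"
    unfolding ord_sum_carrier_def tps_len by simp
  also have "\<dots> \<longleftrightarrow> t < 2 * (n div 3) + 1 \<and> (z = (0, 0) \<or> z = (1, 0))"
    using tps_nth[of t n] by (auto simp: AC_def)
  finally show ?thesis .
qed

lemma tps_rel: "((t, z), (t', z')) \<in> ord_sum_rel (tps n) \<longleftrightarrow>
   (t, z) \<in> ord_sum_carrier (tps n) \<and> (t', z') \<in> ord_sum_carrier (tps n) \<and> ((t = t' \<and> z = z') \<or> t < t')"
proof -
  have "((t, z), (t', z')) \<in> ord_sum_rel (tps n) \<longleftrightarrow>
   (t, z) \<in> ord_sum_carrier (tps n) \<and> (t', z') \<in> ord_sum_carrier (tps n) \<and> ((t = t' \<and> (z, z') \<in> snd (tps n ! t)) \<or> t < t')"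
    unfolding ord_sum_rel_def by simp
  moreover have "(t, z) \<in> ord_sum_carrier (tps n) \<Longrightarrow> (z, z') \<in> snd (tps n ! t) \<longleftrightarrow> z = z'"
    using tps_nth[of t n] tps_car[of t z n] by (auto simp: AC_def Id_on_def)
  ultimately show ?thesis by blast
qed

lemma chi_ord0:
  assumes a: "(r = 0 \<and> a \<le> 1) \<or> (r = 1 \<and> a = 0) \<or> (r = 2 \<and> a = (1::nat))"
    and b: "(s = 0 \<and> b \<le> 1) \<or> (s = 1 \<and> b = 0) \<or> (s = 2 \<and> b = (1::nat))"
  shows "sle (a, 3 * i + r) (b, 3 * j + s) \<longleftrightarrow>
    ((2 * i + (if r = 0 then 0 else 1) = 2 * j + (if s = 0 then 0 else 1) \<and> a = b) \<or>
      2 * i + (if r = 0 then 0 else 1) < 2 * j + (if s = 0 then 0 else (1::nat)))"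
proof -
  have "a = 0 \<or> a = 1" "b = 0 \<or> b = 1" "r = 0 \<or> r = 1 \<or> r = 2" "s = 0 \<or> s = 1 \<or> s = 2"
    using a b by auto
  then show ?thesis using a b by (elim disjE) (simp_all add: sle_def, presburger+)
qed

lemma QM_dec:
  assumes x: "x \<in> QM n"
  obtains a i r where "x = (a, 3 * i + r)" "r < 3" "(r = 0 \<and> a \<le> 1) \<or> (r = 1 \<and> a = 0) \<or> (r = 2 \<and> a = 1)"
    "3 * i + r \<le> n" "chi x = (2 * i + (if r = 0 then 0 else 1), (a, 0))"
proof -
  obtain a k where xa: "x = (a, k)" by (cases x)
  obtain i r where k: "k = 3 * i + r" "r < 3" "k mod 3 = r" "k div 3 = i" by (rule dec3)
  have c: "(k mod 3 = 0 \<and> a \<le> 1) \<or> (k mod 3 = 1 \<and> a = 0) \<or> (k mod 3 = 2 \<and> a = 1)" "k \<le> n"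
    using x xa by (simp_all add: QM_def Mc_def)
  have "chi x = (2 * i + (if r = 0 then 0 else 1), (a, 0))" using xa k by (simp add: chi_def)
  then show ?thesis using that xa k c by simp
qed

lemma sle_antisym: "sle x y \<Longrightarrow> sle y x \<Longrightarrow> x = y"
  unfolding sle_def by auto

lemma QM_Mc: "QM n \<subseteq> Mc n" unfolding QM_def by auto

lemma chi_iso:
  assumes d: "3 dvd n"
  shows "order_iso (QM n) (Restr (rM n) (QM n)) (ord_sum_carrier (tps n)) (ord_sum_rel (tps n)) chi"
proof -
  obtain N where N: "n = 3 * N" using d by blast
  have nd: "n div 3 = N" using N by simp
  have cin: "chi x \<in> ord_sum_carrier (tps n)" if x: "x \<in> QM n" for x
  proof -
    obtain a i r where q: "x = (a, 3 * i + r)" "r < 3" "(r = 0 \<and> a \<le> 1) \<or> (r = 1 \<and> a = 0) \<or> (r = 2 \<and> a = 1)"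
      "3 * i + r \<le> n" "chi x = (2 * i + (if r = 0 then 0 else 1), (a, 0))" using QM_dec[OF x] by blast
    have "2 * i + (if r = 0 then 0 else 1) < 2 * N + 1"
    proof (cases "r = 0")
      case True then show ?thesis using q(4) N by simp
    next
      case False
      then have "i < N" using q(4) N by presburger
      then show ?thesis using False by simp
    qed
    moreover have "(a, 0) = (0, 0) \<or> (a, 0) = (1::nat, 0::nat)" using q(3) by auto
    ultimately show ?thesis using q(5) tps_car nd by simp
  qed
  have ord: "(x, y) \<in> Restr (rM n) (QM n) \<longleftrightarrow> (chi x, chi y) \<in> ord_sum_rel (tps n)"
    if x: "x \<in> QM n" and y: "y \<in> QM n" for x y
  proof -
    obtain a i r where q: "x = (a, 3 * i + r)" "r < 3" "(r = 0 \<and> a \<le> 1) \<or> (r = 1 \<and> a = 0) \<or> (r = 2 \<and> a = 1)"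
      "3 * i + r \<le> n" "chi x = (2 * i + (if r = 0 then 0 else 1), (a, 0))" using QM_dec[OF x] by blast
    obtain b j s where p: "y = (b, 3 * j + s)" "s < 3" "(s = 0 \<and> b \<le> 1) \<or> (s = 1 \<and> b = 0) \<or> (s = 2 \<and> b = 1)"
      "3 * j + s \<le> n" "chi y = (2 * j + (if s = 0 then 0 else 1), (b, 0))" using QM_dec[OF y] by blast
    have xm: "x \<in> Mc n" "y \<in> Mc n" using x y QM_Mc by blast+
    have "(x, y) \<in> Restr (rM n) (QM n) \<longleftrightarrow> sle x y" using x y xm by (simp add: rM_def)
    also have "\<dots> \<longleftrightarrow> ((2 * i + (if r = 0 then 0 else 1) = 2 * j + (if s = 0 then 0 else 1) \<and> a = b) \<or>
      2 * i + (if r = 0 then 0 else 1) < 2 * j + (if s = 0 then 0 else (1::nat)))"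
      using chi_ord0[OF q(3) p(3)] q(1) p(1) by simp
    also have "\<dots> \<longleftrightarrow> (chi x, chi y) \<in> ord_sum_rel (tps n)"
      using tps_rel cin[OF x] cin[OF y] q(5) p(5) by simp
    finally show ?thesis .
  qed
  have inj: "inj_on chi (QM n)"
  proof (rule inj_onI)
    fix x y assume x: "x \<in> QM n" and y: "y \<in> QM n" and e: "chi x = chi y"
    obtain t z where tz: "chi x = (t, z)" by (cases "chi x")
    have "(t, z) \<in> ord_sum_carrier (tps n)" using cin[OF x] tz by simp
    then have "((t, z), (t, z)) \<in> ord_sum_rel (tps n)" using tps_rel[of t z t z n] by blast
    then have r1: "(chi x, chi y) \<in> ord_sum_rel (tps n)" "(chi y, chi x) \<in> ord_sum_rel (tps n)"
      using tz e by simp_all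
    have xm: "x \<in> Mc n" "y \<in> Mc n" using x y QM_Mc by blast+
    have "(x, y) \<in> Restr (rM n) (QM n)" "(y, x) \<in> Restr (rM n) (QM n)" using ord[OF x y] ord[OF y x] r1 by blast+
    then have "sle x y" "sle y x" by (simp_all add: rM_def)
    then show "x = y" by (rule sle_antisym)
  qed
  have img: "chi ` QM n = ord_sum_carrier (tps n)"
  proof
    show "chi ` QM n \<subseteq> ord_sum_carrier (tps n)" using cin by blast
    show "ord_sum_carrier (tps n) \<subseteq> chi ` QM n"
    proof
      fix p assume p: "p \<in> ord_sum_carrier (tps n)"
      obtain t z where pt: "p = (t, z)" by (cases p)
      have t: "t < 2 * N + 1" and z: "z = (0, 0) \<or> z = (1, 0)" using p pt tps_car nd by auto
      obtain e where ze: "z = (e, 0)" "e \<le> 1" using z by auto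
      show "p \<in> chi ` QM n"
      proof (cases "even t")
        case True
        then obtain i where i: "t = 2 * i" by blast
        let ?x = "(e, 3 * i)"
        have "?x \<in> QM n" using ze i t N by (simp add: QM_def Mc_def)
        moreover have "chi ?x = p" using pt ze i by (simp add: chi_def)
        ultimately show ?thesis by (metis imageI)
      next
        case False
        then obtain i where i: "t = 2 * i + 1" using oddE by blast
        let ?x = "(e, 3 * i + 1 + e)"
        have m: "(3 * i + 1 + e) mod 3 = 1 + e" "(3 * i + 1 + e) div 3 = i" using ze(2) by presburger+
        have "?x \<in> QM n" using ze i t N m by (simp add: QM_def Mc_def, presburger)
        moreover have "chi ?x = p" using pt ze i m by (simp add: chi_def)
        ultimately show ?thesis by (metis imageI)
      qed
    qed
  qed
  show ?thesis unfolding order_iso_def bij_betw_def using inj img ord by blast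
qed

context stk
begin

abbreviation Ei where "Ei \<equiv> inv_into (Mc n) Em"

lemma Em_bij: "bij_betw Em (Mc n) S" using oi_bij[OF Em_iso] .

lemma Ei_in: "p \<in> S \<Longrightarrow> Ei p \<in> Mc n \<and> Em (Ei p) = p"
proof -
  assume p: "p \<in> S"
  have "p \<in> Em ` Mc n" using Em_bij p bij_betw_imp_surj_on by blast
  then show ?thesis using inv_into_into f_inv_into_f by metis
qed

lemma Em_in: "x \<in> Mc n \<Longrightarrow> Em x \<in> S" using Em_bij bij_betwE by blast

lemma Em_rel: "x \<in> Mc n \<Longrightarrow> y \<in> Mc n \<Longrightarrow> (Em x, Em y) \<in> r \<longleftrightarrow> sle x y"
  using oi_ord[OF Em_iso] by (simp add: rM_def)

lemma S_aut: "automorphic S r"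
  using aut_transfer[OF oi_inv[OF Em_iso] Mc_aut] .

lemma no_aut:
  assumes nd: "\<not> 3 dvd n" and pr: "proper_retract S r Q"
  shows "\<not> automorphic Q (Restr r Q)"
proof
  assume "automorphic Q (Restr r Q)"
  then obtain g where g: "order_iso Q (Restr r Q) Q (Restr r Q) g" and gfp: "\<forall>x\<in>Q. g x \<noteq> x"
    unfolding automorphic_def by blast
  have QS: "Q \<subseteq> S" and QneS: "Q \<noteq> S" using pr unfolding proper_retract_def is_retract_def by blast+
  obtain f where fQ: "f ` S \<subseteq> Q" and fmono: "\<forall>x\<in>S. \<forall>y\<in>S. (x, y) \<in> r \<longrightarrow> (f x, f y) \<in> r"
    and ffix: "\<forall>q\<in>Q. f q = q"
    using pr unfolding proper_retract_def is_retract_def by blast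
  have gQ: "g x \<in> Q" if "x \<in> Q" for x using oi_bij[OF g] that bij_betwE by blast
  define h where "h = g \<circ> f"
  have hQ: "h p \<in> Q" if "p \<in> S" for p using fQ gQ that h_def by auto
  have hmono: "(h p, h q) \<in> r" if "p \<in> S" "q \<in> S" "(p, q) \<in> r" for p q
  proof -
    have fp: "f p \<in> Q" "f q \<in> Q" using fQ that by blast+
    have "(f p, f q) \<in> r" using fmono that by blast
    then have "(f p, f q) \<in> Restr r Q" using fp by blast
    then have "(g (f p), g (f q)) \<in> Restr r Q" using oi_ord[OF g fp] by blast
    then show ?thesis unfolding h_def by simp
  qed
  have hfp: "h p \<noteq> p" if p: "p \<in> S" for p
  proof
    assume e: "h p = p"
    then have pQ: "p \<in> Q" using hQ p by metis
    then have "f p = p" using ffix by blast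
    then have "g p = p" using e h_def by simp
    then show False using gfp pQ by blast
  qed
  define hM where "hM = Ei \<circ> h \<circ> Em"
  have hMM: "\<forall>x\<in>Mc n. hM x \<in> Mc n"
  proof
    fix x assume "x \<in> Mc n"
    then have "h (Em x) \<in> S" using Em_in hQ QS by blast
    then show "hM x \<in> Mc n" using Ei_in hM_def by simp
  qed
  have Emh: "Em (hM x) = h (Em x)" if "x \<in> Mc n" for x
  proof -
    have "h (Em x) \<in> S" using that Em_in hQ QS by blast
    then show ?thesis using Ei_in hM_def by simp
  qed
  have hMmono: "\<forall>x\<in>Mc n. \<forall>y\<in>Mc n. sle x y \<longrightarrow> sle (hM x) (hM y)"
  proof (intro ballI impI)
    fix x y assume x: "x \<in> Mc n" and y: "y \<in> Mc n" and s: "sle x y"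
    have "(Em x, Em y) \<in> r" using Em_rel[OF x y] s by simp
    then have "(h (Em x), h (Em y)) \<in> r" using hmono Em_in x y by blast
    then have "(Em (hM x), Em (hM y)) \<in> r" using Emh x y by simp
    then show "sle (hM x) (hM y)" using Em_rel hMM x y by blast
  qed
  have hMfp: "\<forall>x\<in>Mc n. hM x \<noteq> x"
  proof (intro ballI notI)
    fix x assume x: "x \<in> Mc n" and e: "hM x = x"
    then have "h (Em x) = Em x" using Emh by metis
    then show False using hfp Em_in x by blast
  qed
  have injM: "inj_on hM (Mc n)" using inj_core[OF hMM hMmono hMfp nd] .
  have injh: "inj_on h S"
  proof (rule inj_onI)
    fix p q assume p: "p \<in> S" and q: "q \<in> S" and e: "h p = h q"
    obtain x where x: "x \<in> Mc n" "Em x = p" using Ei_in p by blast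
    obtain y where y: "y \<in> Mc n" "Em y = q" using Ei_in q by blast
    have "Em (hM x) = Em (hM y)" using Emh x y e by simp
    moreover have "hM x \<in> Mc n" "hM y \<in> Mc n" using hMM x y by blast+
    ultimately have "hM x = hM y" using inj_onD[OF bij_betw_imp_inj_on[OF Em_bij]] by blast
    then have "x = y" using inj_onD[OF injM] x y by blast
    then show "p = q" using x y by simp
  qed
  have hS: "h ` S \<subseteq> Q" using hQ by blast
  have finQ: "finite Q" using finite_subset[OF QS fin] .
  have "card (h ` S) \<le> card Q" by (rule card_mono[OF finQ hS])
  then have "card S \<le> card Q" using card_image[OF injh] by simp
  moreover have "card Q \<le> card S" by (rule card_mono[OF fin QS])
  ultimately have "card Q = card S" by simp
  then have "Q = S" by (rule card_subset_eq[OF fin QS])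
  then show False using QneS by simp
qed

lemma constr:
  assumes d: "3 dvd n"
  shows "\<exists>Q. proper_retract S r Q \<and> iso_to_tower Q (Restr r Q)"
proof -
  let ?Q = "Em ` QM n"
  have QMc: "QM n \<subseteq> Mc n" by (rule QM_Mc)
  have QS: "?Q \<subseteq> S" using Em_in QMc by blast
  define fS where "fS = Em \<circ> fM \<circ> Ei"
  have fSQ: "fS ` S \<subseteq> ?Q"
  proof
    fix q assume "q \<in> fS ` S"
    then obtain p where p: "p \<in> S" "q = fS p" by blast
    have "Ei p \<in> Mc n" using Ei_in p by blast
    then have "fM (Ei p) \<in> QM n" using fM_in[OF d] by blast
    then show "q \<in> ?Q" using p fS_def by simp
  qed
  have fSmono: "\<forall>x\<in>S. \<forall>y\<in>S. (x, y) \<in> r \<longrightarrow> (fS x, fS y) \<in> r"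
  proof (intro ballI impI)
    fix p q assume p: "p \<in> S" and q: "q \<in> S" and pq: "(p, q) \<in> r"
    have ep: "Ei p \<in> Mc n" "Em (Ei p) = p" using Ei_in p by blast+
    have eq: "Ei q \<in> Mc n" "Em (Ei q) = q" using Ei_in q by blast+
    have "sle (Ei p) (Ei q)" using Em_rel[OF ep(1) eq(1)] pq ep eq by simp
    then have "sle (fM (Ei p)) (fM (Ei q))" using fM_mono ep eq by blast
    moreover have "fM (Ei p) \<in> Mc n" "fM (Ei q) \<in> Mc n" using fM_in[OF d] ep eq QMc by blast+
    ultimately show "(fS p, fS q) \<in> r" using Em_rel fS_def by simp
  qed
  have fSfix: "\<forall>q\<in>?Q. fS q = q"
  proof
    fix q assume "q \<in> ?Q"
    then obtain x where x: "x \<in> QM n" "q = Em x" by blast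
    have xm: "x \<in> Mc n" using x QMc by blast
    have "Ei (Em x) = x" using inv_into_f_f[OF bij_betw_imp_inj_on[OF Em_bij] xm] .
    then show "fS q = q" using x fM_fix fS_def by simp
  qed
  have ne: "?Q \<noteq> S"
  proof
    assume e: "?Q = S"
    have m: "(2, 0) \<in> Mc n" by (simp add: Mc_def)
    then have "Em (2, 0) \<in> ?Q" using e Em_in by blast
    then obtain x where x: "x \<in> QM n" "Em (2, 0) = Em x" by blast
    have "x \<in> Mc n" using x QMc by blast
    then have "(2, 0) = x" using inj_onD[OF bij_betw_imp_inj_on[OF Em_bij] x(2) m] by blast
    then have "(2, 0) \<in> QM n" using x(1) by simp
    then show False by (simp add: QM_def)
  qed
  have pr: "proper_retract S r ?Q"
    unfolding proper_retract_def is_retract_def using QS fSQ fSmono fSfix ne by blast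
  have i1: "order_iso (QM n) (Restr (rM n) (QM n)) ?Q (Restr r ?Q) Em" using oi_restr[OF Em_iso QMc] .
  have i2: "order_iso ?Q (Restr r ?Q) (QM n) (Restr (rM n) (QM n)) (inv_into (QM n) Em)" using oi_inv[OF i1] .
  have "order_iso ?Q (Restr r ?Q) (ord_sum_carrier (tps n)) (ord_sum_rel (tps n)) (chi \<circ> inv_into (QM n) Em)"
    using oi_comp[OF i2 chi_iso[OF d]] .
  then have "iso_to_tower ?Q (Restr r ?Q)"
    unfolding iso_to_tower_def isomorphic_def using tps_sec by (intro exI[of _ "tps n"]) (auto simp: tps_def)
  then show ?thesis using pr by blast
qed

end

theorem proposition5p11:
  fixes S :: "'a set" and r :: "'a rel" and n :: nat
  assumes "six_stack S r n"
  shows "((\<exists>Q. proper_retract S r Q \<and> iso_to_tower Q (Restr r Q)) \<longleftrightarrow> 3 dvd n)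
         \<and> (minimal_automorphic S r \<longleftrightarrow> \<not> 3 dvd n)"
proof -
  interpret stk S r n using assms by (unfold_locales)
  have P1: "(\<exists>Q. proper_retract S r Q \<and> iso_to_tower Q (Restr r Q)) \<longleftrightarrow> 3 dvd n"
  proof
    assume "\<exists>Q. proper_retract S r Q \<and> iso_to_tower Q (Restr r Q)"
    then obtain Q where Q: "proper_retract S r Q" "iso_to_tower Q (Restr r Q)" by blast
    have "automorphic Q (Restr r Q)" using iso_tower_aut Q(2) .
    then show "3 dvd n" using no_aut Q(1) by blast
  next
    assume "3 dvd n"
    then show "\<exists>Q. proper_retract S r Q \<and> iso_to_tower Q (Restr r Q)" by (rule constr)
  qed
  have P2: "minimal_automorphic S r \<longleftrightarrow> \<not> 3 dvd n"
  proof
    assume m: "minimal_automorphic S r"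
    show "\<not> 3 dvd n"
    proof
      assume "3 dvd n"
      then obtain Q where Q: "proper_retract S r Q" "iso_to_tower Q (Restr r Q)" using constr by blast
      have "automorphic Q (Restr r Q)" using iso_tower_aut Q(2) .
      then show False using m Q(1) unfolding minimal_automorphic_def by blast
    qed
  next
    assume nd: "\<not> 3 dvd n"
    show "minimal_automorphic S r"
      unfolding minimal_automorphic_def using S_aut no_aut[OF nd] by blast
  qed
  show ?thesis using P1 P2 by blast
qed

end
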